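(* Let $K\ge1$, $\varphi:[-1,1]\to\mathbb{C}$ infinitely differentiable, $\lambda\in\mathbb{C}$, $\tau>0$, $q\in\{0,1,\dots,K\}$, and let $\sigma_{K,q}$ be a constant such that $\|f-P_Kf\|_{C^0}\le\sigma_{K,q}\|f^{(q+1)}\|_{C^0}$ for all $f\in C^{q+1}([-1,1],\mathbb{C})$. Set $$\tilde C=\sigma_{K,q}\Big(|\tau\lambda|^{q+1}\frac{e^{2\tau\Re(\lambda)}-1}{\Re(\lambda)}\|\varphi\|_{C^0}+\tau\sum_{i=0}^q|\tau\lambda|^i\|\varphi^{(q-i)}\|_{C^0}\Big),$$ where $\frac{e^{2\tau\Re(\lambda)}-1}{\Re(\lambda)}$ is interpreted as $2\tau$ if $\Re(\lambda)=0$. Then $$\Big\|(I-P_K)\Big(t\mapsto\tau\int_{-1}^te^{\tau(t-s)\lambda}\varphi(s)\,ds\Big)\Big\|_{C^0}\le\tilde C.$$ Moreover, if $\varphi$ extends analytically to $\mathcal{E}_\rho$ for some $\rho>1$ and is bounded there, then with $\zeta(x)=(e^x-1)/x$ for $x\neq0$, $\zeta(0)=1$, and $$\check C=\frac{2\tau(\rho+\rho^{-1}+2)}{\rho^K(\rho-1)}\,\zeta\Big(\tau\Big(\Re(\lambda)+\tfrac12\sqrt{\Re(\lambda)^2(\rho+\rho^{-1})^2+\Im(\lambda)^2(\rho-\rho^{-1})^2}\Big)\Big)\sup_{z\in\mathcal{E}_\rho}|\varphi(z)|,$$ one also has $$\Big\|(I-P_K)\Big(t\mapsto\tau\int_{-1}^te^{\tau(t-s)\lambda}\varphi(s)\,ds\Big)\Big\|_{C^0}\le\check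 C.$$
   Context: $P_K$ maps $f\in C([-1,1],\mathbb{C})$ to its polynomial interpolant of degree $\le K$ at the Chebyshev points $t_k=\cos(\pi k/K)$, $k=0,\dots,K$; $\|\cdot\|_{C^0}$ is the sup norm on $[-1,1]$. For $\rho\ge1$, $\mathcal{E}_\rho=\{z\in\mathbb{C}:|z-1|+|z+1|<\rho+\rho^{-1}\}$ is the open Bernstein ellipse. *)

theory Defs
  imports "HOL-Complex_Analysis.Complex_Analysis"
begin

definition cheb_pt :: "nat \<Rightarrow> nat \<Rightarrow> real" where
  "cheb_pt K k = cos (pi * real k / real K)"

definition cheb_interp :: "nat \<Rightarrow> (real \<Rightarrow> complex) \<Rightarrow> real \<Rightarrow> complex" where
  "cheb_interp K f t =
     (\<Sum>k\<le>K. f (cheb_pt K k) *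
        of_real (\<Prod>j\<in>{..K} - {k}. (t - cheb_pt K j) / (cheb_pt K k - cheb_pt K j)))"

definition C0norm :: "(real \<Rightarrow> complex) \<Rightarrow> real" where
  "C0norm f = (SUP t\<in>{-1..1}. norm (f t))"

definition deriv_chain :: "nat \<Rightarrow> (nat \<Rightarrow> real \<Rightarrow> complex) \<Rightarrow> (real \<Rightarrow> complex) \<Rightarrow> bool" where
  "deriv_chain m g f \<longleftrightarrow> g 0 = f \<and>
     (\<forall>i<m. \<forall>t\<in>{-1..1}. (g i has_vector_derivative g (Suc i) t) (at t within {-1..1}))"

definition bernstein_ellipse :: "real \<Rightarrow> complex set" where
  "bernstein_ellipse \<rho> = {z. cmod (z - 1) + cmod (z + 1) < \<rho> + inverse \<rho>}"

definition zeta :: "real \<Rightarrow> real" where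
  "zeta x = (if x = 0 then 1 else (exp x - 1) / x)"

end

theory Submission
  imports Defs
begin

lemma C0_upper:
  assumes "continuous_on {-1..1} f" "t \<in> {-1..1}"
  shows "norm (f t) \<le> C0norm f"
proof -
  have "compact ((\<lambda>t. norm (f t)) ` {-1..1})"
    by (intro compact_continuous_image continuous_intros assms(1)) auto
  then have "bdd_above ((\<lambda>t. norm (f t)) ` {-1..1})"
    by (meson bounded_imp_bdd_above compact_imp_bounded)
  then show ?thesis unfolding C0norm_def by (rule cSUP_upper[OF assms(2)])
qed

lemma C0_least:
  assumes "\<And>t. t \<in> {-1..1} \<Longrightarrow> norm (f t) \<le> B"
  shows "C0norm f \<le> B"
  unfolding C0norm_def by (rule cSUP_least) (use assms in auto)

lemma C0_nonneg: "continuous_on {-1..1} f \<Longrightarrow> 0 \<le> C0norm f"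
  using C0_upper[of f 0] by (meson atLeastAtMost_iff norm_ge_zero order_trans neg_le_0_iff_le zero_le_one)

lemma vd_cont:
  assumes "\<And>t. t \<in> {-1..1} \<Longrightarrow> (f has_vector_derivative f' t) (at t within {-1..1})"
  shows "continuous_on {-1..1::real} f"
  using assms has_vector_derivative_continuous continuous_on_eq_continuous_within by blast

lemma exp_integral:
  fixes a \<tau> t :: real assumes "\<tau> > 0" "-1 \<le> t"
  shows "((\<lambda>s. exp (\<tau>*(t-s)*a)) has_integral
           (if a = 0 then t+1 else (exp (\<tau>*(t+1)*a) - 1)/(\<tau>*a))) {-1..t}"
proof (cases "a = 0")
  case True
  have "((\<lambda>s. 1) has_integral ((\<lambda>s. s) t - (\<lambda>s. s) (-1))) {-1..t}"
    by (rule fundamental_theorem_of_calculus[OF assms(2)])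
       (auto intro!: derivative_eq_intros simp flip: has_real_derivative_iff_has_vector_derivative)
  then show ?thesis using True by simp
next
  case False
  let ?G = "\<lambda>s. - exp (\<tau>*(t-s)*a) / (\<tau>*a)"
  have "((\<lambda>s. exp (\<tau>*(t-s)*a)) has_integral (?G t - ?G (-1))) {-1..t}"
  proof (rule fundamental_theorem_of_calculus[OF assms(2)])
    fix x assume "x \<in> {-1..t}"
    show "(?G has_vector_derivative exp (\<tau>*(t-x)*a)) (at x within {-1..t})"
      unfolding has_real_derivative_iff_has_vector_derivative[symmetric]
      using False assms by (auto intro!: derivative_eq_intros simp: field_simps)
  qed
  then show ?thesis using False assms by (simp add: field_simps)
qed

definition E2 :: "real \<Rightarrow> complex \<Rightarrow> real" where
  "E2 \<tau> lam = (if Re lam = 0 then 2 * \<tau> else (exp (2 * \<tau> * Re lam) - 1) / Re lam)"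

lemma u_bound:
  fixes \<phi> :: "real \<Rightarrow> complex"
  assumes tau: "\<tau> > 0" and cont: "continuous_on {-1..1} \<phi>" and t: "t \<in> {-1..1}"
  shows "norm (of_real \<tau> * integral {-1..t} (\<lambda>s. exp (of_real (\<tau> * (t - s)) * lam) * \<phi> s))
          \<le> E2 \<tau> lam * C0norm \<phi>"
proof -
  let ?a = "Re lam"
  let ?N = "C0norm \<phi>"
  have N0: "0 \<le> ?N" by (rule C0_nonneg[OF cont])
  have sub: "{-1..t} \<subseteq> {-1..1}" using t by auto
  have int1: "(\<lambda>s. exp (of_real (\<tau> * (t - s)) * lam) * \<phi> s) integrable_on {-1..t}"
    by (intro integrable_continuous_interval continuous_intros continuous_on_subset[OF cont sub])
  have hi: "((\<lambda>s. exp (\<tau>*(t-s)*?a)) has_integral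
           (if ?a = 0 then t+1 else (exp (\<tau>*(t+1)*?a) - 1)/(\<tau>*?a))) {-1..t}"
    using exp_integral[OF tau, of t ?a] t by auto
  have int2: "(\<lambda>s. exp (\<tau>*(t-s)*?a) * ?N) integrable_on {-1..t}"
    using hi by (intro integrable_on_mult_left) blast
  have "norm (integral {-1..t} (\<lambda>s. exp (of_real (\<tau> * (t - s)) * lam) * \<phi> s))
        \<le> integral {-1..t} (\<lambda>s. exp (\<tau>*(t-s)*?a) * ?N)"
  proof (rule integral_norm_bound_integral[OF int1 int2])
    fix s assume s: "s \<in> {-1..t}"
    have "norm (\<phi> s) \<le> ?N" using C0_upper[OF cont] s sub by auto
    then show "norm (exp (of_real (\<tau> * (t - s)) * lam) * \<phi> s) \<le> exp (\<tau>*(t-s)*?a) * ?N"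
      by (simp add: norm_mult norm_exp_eq_Re mult_left_mono)
  qed
  also have "\<dots> = (if ?a = 0 then t+1 else (exp (\<tau>*(t+1)*?a) - 1)/(\<tau>*?a)) * ?N"
    using integral_unique[OF hi] by (simp add: Henstock_Kurzweil_Integration.integral_mult_left)
  finally have 1: "norm (integral {-1..t} (\<lambda>s. exp (of_real (\<tau> * (t - s)) * lam) * \<phi> s))
     \<le> (if ?a = 0 then t+1 else (exp (\<tau>*(t+1)*?a) - 1)/(\<tau>*?a)) * ?N" .
  have 2: "\<tau> * (if ?a = 0 then t+1 else (exp (\<tau>*(t+1)*?a) - 1)/(\<tau>*?a)) \<le> E2 \<tau> lam"
  proof (cases "?a = 0")
    case True then show ?thesis using t tau by (simp add: E2_def)
  next
    case False
    have eq: "\<tau> * ((exp (\<tau>*(t+1)*?a) - 1)/(\<tau>*?a)) = (exp (\<tau>*(t+1)*?a) - 1)/?a"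
      using tau False by (simp add: field_simps)
    show ?thesis
    proof (cases "?a > 0")
      case True
      have "exp (\<tau>*(t+1)*?a) \<le> exp (2*\<tau>*?a)" using t tau True
        by (simp add: mult_right_mono mult_left_mono)
      then show ?thesis using True False eq by (simp add: E2_def divide_right_mono)
    next
      case nf: False
      then have neg: "?a < 0" using False by simp
      have "2*\<tau>*?a \<le> \<tau>*(t+1)*?a" using t tau neg
        by (simp add: mult_right_mono_neg mult_left_mono)
      then have "exp (2*\<tau>*?a) \<le> exp (\<tau>*(t+1)*?a)" by simp
      then show ?thesis using neg False eq
        by (simp add: E2_def divide_right_mono_neg)
    qed
  qed
  have "norm (of_real \<tau> * integral {-1..t} (\<lambda>s. exp (of_real (\<tau> * (t - s)) * lam) * \<phi> s))
     = \<tau> * norm (integral {-1..t} (\<lambda>s. exp (of_real (\<tau> * (t - s)) * lam) * \<phi> s))"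
    using tau by (simp add: norm_mult)
  also have "\<dots> \<le> \<tau> * ((if ?a = 0 then t+1 else (exp (\<tau>*(t+1)*?a) - 1)/(\<tau>*?a)) * ?N)"
    using 1 tau by (intro mult_left_mono) auto
  also have "\<dots> \<le> E2 \<tau> lam * ?N"
    using 2 N0 by (metis mult.assoc mult_right_mono)
  finally show ?thesis .
qed


lemma u_deriv:
  fixes \<phi> :: "real \<Rightarrow> complex" and \<tau> :: real and lam :: complex
  assumes cont: "continuous_on {-1..1} \<phi>" and t: "t \<in> {-1..1}"
  defines "u \<equiv> (\<lambda>t. of_real \<tau> * integral {-1..t} (\<lambda>s. exp (of_real (\<tau> * (t - s)) * lam) * \<phi> s))"
  shows "(u has_vector_derivative (of_real \<tau> * lam * u t + of_real \<tau> * \<phi> t)) (at t within {-1..1})"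
proof -
  define k where "k = (\<lambda>s. exp (- (of_real (\<tau> * s) * lam)) * \<phi> s)"
  define e where "e = (\<lambda>t. exp (of_real (\<tau> * t) * lam))"
  have contk: "continuous_on {-1..1} k" unfolding k_def by (intro continuous_intros cont)
  have eq: "u = (\<lambda>t. of_real \<tau> * (e t * integral {-1..t} k))"
  proof
    fix t
    have "(\<lambda>s. exp (of_real (\<tau> * (t - s)) * lam) * \<phi> s) = (\<lambda>s. e t * k s)"
    proof
      fix s
      have "exp (of_real (\<tau> * (t - s)) * lam) = exp (of_real (\<tau> * t) * lam) * exp (- (of_real (\<tau> * s) * lam))"
        by (subst exp_add[symmetric]) (simp add: algebra_simps)
      then show "exp (of_real (\<tau> * (t - s)) * lam) * \<phi> s = e t * k s"
        unfolding e_def k_def by simp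
    qed
    then show "u t = of_real \<tau> * (e t * integral {-1..t} k)"
      unfolding u_def by (simp add: Henstock_Kurzweil_Integration.integral_mult_right)
  qed
  have dI: "((\<lambda>t. integral {-1..t} k) has_vector_derivative k t) (at t within {-1..1})"
    by (rule integral_has_vector_derivative[OF contk t])
  have df: "((\<lambda>t. of_real (\<tau> * t) * lam) has_vector_derivative of_real \<tau> * lam) (at t within {-1..1})"
    by (intro has_vector_derivative_mult_left has_vector_derivative_of_real derivative_eq_intros) auto
  have de: "(e has_vector_derivative (of_real \<tau> * lam) * e t) (at t within {-1..1})"
  proof -
    have "(exp \<circ> (\<lambda>t. of_real (\<tau> * t) * lam) has_vector_derivative (of_real \<tau> * lam) * exp (of_real (\<tau> * t) * lam)) (at t within {-1..1})"
      by (rule field_vector_diff_chain_within[OF df]) (auto intro: has_field_derivative_at_within DERIV_exp)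
    then show ?thesis unfolding e_def by (simp add: o_def)
  qed
  have "((\<lambda>t. of_real \<tau> * (e t * integral {-1..t} k)) has_vector_derivative
          of_real \<tau> * (e t * k t + (of_real \<tau> * lam) * e t * integral {-1..t} k)) (at t within {-1..1})"
    by (intro has_vector_derivative_mult_right has_vector_derivative_mult dI de)
  moreover have "e t * k t = \<phi> t"
    unfolding e_def k_def by (simp add: exp_minus field_simps)
  ultimately show ?thesis unfolding eq by (simp add: algebra_simps)
qed

fun ud :: "real \<Rightarrow> complex \<Rightarrow> (nat \<Rightarrow> real \<Rightarrow> complex) \<Rightarrow> (real \<Rightarrow> complex) \<Rightarrow> nat \<Rightarrow> real \<Rightarrow> complex" where
  "ud \<tau> lam D u 0 = u"
| "ud \<tau> lam D u (Suc i) = (\<lambda>t. of_real \<tau> * lam * ud \<tau> lam D u i t + of_real \<tau> * D i t)"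

lemma ud_closed:
  "ud \<tau> lam D u n t = (of_real \<tau> * lam)^n * u t + of_real \<tau> * (\<Sum>i<n. (of_real \<tau> * lam)^i * D (n - 1 - i) t)"
proof (induction n)
  case 0 then show ?case by simp
next
  case (Suc n)
  have "(\<Sum>i<Suc n. (of_real \<tau> * lam)^i * D (Suc n - 1 - i) t)
       = D n t + (\<Sum>i<n. (of_real \<tau> * lam)^(Suc i) * D (n - 1 - i) t)"
    by (simp only: sum.lessThan_Suc_shift) simp
  also have "\<dots> = D n t + (of_real \<tau> * lam) * (\<Sum>i<n. (of_real \<tau> * lam)^i * D (n - 1 - i) t)"
    by (simp add: sum_distrib_left mult.assoc)
  finally show ?case using Suc by (simp add: algebra_simps)
qed

lemma ud_deriv:
  fixes \<phi> :: "real \<Rightarrow> complex" and \<tau> :: real and lam :: complex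
  assumes smooth: "D 0 = \<phi>"
      "\<And>i t. t \<in> {-1..1} \<Longrightarrow> (D i has_vector_derivative D (Suc i) t) (at t within {-1..1})"
  defines "u \<equiv> (\<lambda>t. of_real \<tau> * integral {-1..t} (\<lambda>s. exp (of_real (\<tau> * (t - s)) * lam) * \<phi> s))"
  shows "t \<in> {-1..1} \<Longrightarrow> (ud \<tau> lam D u i has_vector_derivative ud \<tau> lam D u (Suc i) t) (at t within {-1..1})"
proof (induction i arbitrary: t)
  case 0
  have cont: "continuous_on {-1..1} \<phi>" using smooth vd_cont by metis
  show ?case using u_deriv[OF cont 0, of \<tau> lam] smooth(1) unfolding u_def by simp
next
  case (Suc i)
  have "((\<lambda>t. of_real \<tau> * lam * ud \<tau> lam D u i t + of_real \<tau> * D i t) has_vector_derivative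
     (of_real \<tau> * lam * ud \<tau> lam D u (Suc i) t + of_real \<tau> * D (Suc i) t)) (at t within {-1..1})"
    by (intro has_vector_derivative_add has_vector_derivative_mult_right Suc.IH[OF Suc.prems] smooth(2)[OF Suc.prems])
  then show ?case by simp
qed

lemma sigma_nonneg:
  fixes \<sigma> :: real
  assumes K: "K \<ge> 1"
    and sigma: "\<And>f g. deriv_chain (Suc q) g f \<Longrightarrow> continuous_on {-1..1} (g (Suc q)) \<Longrightarrow>
                 C0norm (\<lambda>t. f t - cheb_interp K f t) \<le> \<sigma> * C0norm (g (Suc q))"
  shows "\<sigma> \<ge> 0"
proof -
  define p :: "real poly" where "p = (\<Prod>k\<le>K. [:- cheb_pt K k, 1:])"
  define f where "f = (\<lambda>t. complex_of_real (poly p t))"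
  define g where "g = (\<lambda>i t. complex_of_real (poly ((pderiv ^^ i) p) t))"
  have dg: "(g i has_vector_derivative g (Suc i) t) (at t within S)" for i t S
    unfolding g_def by (auto intro!: has_vector_derivative_of_real has_field_derivative_at_within poly_DERIV)
  have chain: "deriv_chain (Suc q) g f"
    unfolding deriv_chain_def using dg by (simp add: f_def g_def)
  have contg: "continuous_on {-1..1} (g (Suc q))"
    using dg vd_cont by metis
  have zero: "f (cheb_pt K k) = 0" if "k \<le> K" for k
    unfolding f_def p_def using that by (auto simp: poly_prod)
  have interp: "cheb_interp K f t = 0" for t
    unfolding cheb_interp_def using zero by simp
  have "infinite ({-1..1::real} - cheb_pt K ` {..K})"
    by (rule Diff_infinite_finite) auto
  then obtain t0 where t0: "t0 \<in> {-1..1}" "t0 \<notin> cheb_pt K ` {..K}"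
    by (metis Diff_iff finite.emptyI infinite_imp_nonempty ex_in_conv)
  have "poly p t0 \<noteq> 0"
    unfolding p_def poly_prod using t0 by (auto simp: prod_zero_iff)
  then have pos: "0 < norm (f t0)" by (simp add: f_def)
  have feq: "(\<lambda>t. f t - cheb_interp K f t) = f" using interp by auto
  have contf: "continuous_on {-1..1} (\<lambda>t. f t - cheb_interp K f t)"
  proof -
    have "continuous_on {-1..1} f" unfolding f_def by (intro continuous_intros)
    then show ?thesis by (simp add: interp)
  qed
  have "norm (f t0 - cheb_interp K f t0) \<le> C0norm (\<lambda>t. f t - cheb_interp K f t)"
    by (rule C0_upper[OF contf t0(1)])
  then have "0 < C0norm (\<lambda>t. f t - cheb_interp K f t)" using pos interp by (simp del: norm_le_zero_iff zero_less_norm_iff)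
  also have "\<dots> \<le> \<sigma> * C0norm (g (Suc q))" by (rule sigma[OF chain contg])
  finally have "0 < \<sigma> * C0norm (g (Suc q))" .
  moreover have "0 \<le> C0norm (g (Suc q))" by (rule C0_nonneg[OF contg])
  ultimately show ?thesis by (metis linorder_not_less mult_nonpos_nonneg not_less_iff_gr_or_eq)
qed

lemma part1:
  fixes K q :: nat and \<phi> :: "real \<Rightarrow> complex" and D :: "nat \<Rightarrow> real \<Rightarrow> complex"
    and lam :: complex and \<tau> \<sigma> :: real
  assumes K: "K \<ge> 1"
    and smooth: "D 0 = \<phi>"
      "\<And>i t. t \<in> {-1..1} \<Longrightarrow> (D i has_vector_derivative D (Suc i) t) (at t within {-1..1})"
    and tau: "\<tau> > 0"
    and sigma: "\<And>f g. deriv_chain (Suc q) g f \<Longrightarrow> continuous_on {-1..1} (g (Suc q)) \<Longrightarrow>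
                 C0norm (\<lambda>t. f t - cheb_interp K f t) \<le> \<sigma> * C0norm (g (Suc q))"
  defines "u \<equiv> (\<lambda>t. of_real \<tau> * integral {-1..t} (\<lambda>s. exp (of_real (\<tau> * (t - s)) * lam) * \<phi> s))"
  shows "C0norm (\<lambda>t. u t - cheb_interp K u t)
           \<le> \<sigma> * (cmod (of_real \<tau> * lam) ^ (q + 1) *
                   (if Re lam = 0 then 2 * \<tau> else (exp (2 * \<tau> * Re lam) - 1) / Re lam) * C0norm \<phi>
                 + \<tau> * (\<Sum>i\<le>q. cmod (of_real \<tau> * lam) ^ i * C0norm (D (q - i))))"
proof -
  let ?g = "ud \<tau> lam D u"
  have dg: "t \<in> {-1..1} \<Longrightarrow> (?g i has_vector_derivative ?g (Suc i) t) (at t within {-1..1})" for i t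
    unfolding u_def by (rule ud_deriv[OF smooth])
  have chain: "deriv_chain (Suc q) ?g u" unfolding deriv_chain_def using dg by simp
  have contg: "continuous_on {-1..1} (?g (Suc q))" using dg vd_cont by metis
  have contD: "continuous_on {-1..1} (D j)" for j using smooth(2) vd_cont by metis
  have contphi: "continuous_on {-1..1} \<phi>" using contD[of 0] smooth(1) by simp
  have s0: "\<sigma> \<ge> 0" using sigma_nonneg[of K q \<sigma>] K sigma by blast
  let ?B = "cmod (of_real \<tau> * lam) ^ (q + 1) *
                   (if Re lam = 0 then 2 * \<tau> else (exp (2 * \<tau> * Re lam) - 1) / Re lam) * C0norm \<phi>
                 + \<tau> * (\<Sum>i\<le>q. cmod (of_real \<tau> * lam) ^ i * C0norm (D (q - i)))"
  have "C0norm (?g (Suc q)) \<le> ?B"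
  proof (rule C0_least)
    fix t :: real assume t: "t \<in> {-1..1}"
    have "?g (Suc q) t = (of_real \<tau> * lam)^(Suc q) * u t + of_real \<tau> * (\<Sum>i\<le>q. (of_real \<tau> * lam)^i * D (q - i) t)"
      by (simp only: ud_closed lessThan_Suc_atMost) simp
    then have "norm (?g (Suc q) t) \<le> norm ((of_real \<tau> * lam)^(Suc q) * u t) + norm (of_real \<tau> * (\<Sum>i\<le>q. (of_real \<tau> * lam)^i * D (q - i) t))"
      by (metis norm_triangle_ineq)
    also have "norm ((of_real \<tau> * lam)^(Suc q) * u t) \<le> cmod (of_real \<tau> * lam) ^ (q + 1) * (E2 \<tau> lam * C0norm \<phi>)"
      unfolding norm_mult norm_power using u_bound[OF tau contphi t, of lam] unfolding u_def
      by (simp add: mult_left_mono)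
    also have "norm (of_real \<tau> * (\<Sum>i\<le>q. (of_real \<tau> * lam)^i * D (q - i) t))
        \<le> \<tau> * (\<Sum>i\<le>q. cmod (of_real \<tau> * lam) ^ i * C0norm (D (q - i)))"
    proof -
      have "norm (\<Sum>i\<le>q. (of_real \<tau> * lam)^i * D (q - i) t) \<le> (\<Sum>i\<le>q. norm ((of_real \<tau> * lam)^i * D (q - i) t))"
        by (rule norm_sum)
      also have "\<dots> \<le> (\<Sum>i\<le>q. cmod (of_real \<tau> * lam) ^ i * C0norm (D (q - i)))"
        by (intro sum_mono) (simp add: norm_mult norm_power mult_left_mono C0_upper[OF contD t])
      finally show ?thesis using tau by (simp add: norm_mult mult_left_mono)
    qed
    finally show "norm (?g (Suc q) t) \<le> ?B" by (simp add: E2_def mult.assoc)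
  qed
  then have "\<sigma> * C0norm (?g (Suc q)) \<le> \<sigma> * ?B" using s0 by (rule mult_left_mono)
  with sigma[OF chain contg] show ?thesis by linarith
qed

fun cheb :: "nat \<Rightarrow> real poly" where
  "cheb 0 = 1"
| "cheb (Suc 0) = [:0, 1:]"
| "cheb (Suc (Suc n)) = smult 2 [:0, 1:] * cheb (Suc n) - cheb n"

lemma cheb_degree: "degree (cheb n) \<le> n"
proof (induction n rule: cheb.induct)
  case (3 n)
  have "degree (smult 2 [:0, 1:] * cheb (Suc n)) \<le> Suc (Suc n)"
    using degree_mult_le[of "smult 2 [:0, 1:]" "cheb (Suc n)"] 3(1) by auto
  moreover have "degree (cheb n) \<le> Suc (Suc n)" using 3(2) by simp
  ultimately show ?case by (simp add: degree_diff_le)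
qed auto

lemma cos_rec: "cos (real (Suc (Suc n)) * \<theta>) = 2 * cos \<theta> * cos (real (Suc n) * \<theta>) - cos (real n * \<theta>)"
proof -
  have a: "real (Suc (Suc n)) * \<theta> = real (Suc n) * \<theta> + \<theta>" by (simp add: algebra_simps)
  have b: "real n * \<theta> = real (Suc n) * \<theta> - \<theta>" by (simp add: algebra_simps)
  show ?thesis unfolding a b cos_add cos_diff by simp
qed

lemma cheb_cos: "poly (cheb n) (cos \<theta>) = cos (real n * \<theta>)"
proof (induction n rule: cheb.induct)
  case (3 n)
  show ?case using 3 cos_rec[of n \<theta>] by (simp add: algebra_simps)
qed auto

lemma cheb_bound: assumes "x \<in> {-1..1}" shows "\<bar>poly (cheb n) x\<bar> \<le> 1"
proof -
  have "cos (arccos x) = x" using assms by (intro cos_arccos) auto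
  then have "poly (cheb n) x = cos (real n * arccos x)" using cheb_cos[of n "arccos x"] by simp
  then show ?thesis by (simp only: abs_cos_le_one)
qed

lemma r1: fixes K i :: nat assumes "i \<le> K" "K \<ge> 1" shows "pi * real i / real K \<le> pi"
proof -
  have K0: "real K > 0" using assms by simp
  have "pi * real i / real K \<le> pi * real K / real K"
    using assms by (intro divide_right_mono mult_left_mono) auto
  then show ?thesis using K0 by simp
qed
lemma cheb_pt_inj: fixes K j k :: nat assumes "K \<ge> 1" "j \<le> K" "k \<le> K" "cheb_pt K j = cheb_pt K k"
  shows "j = k"
proof -
  have K0: "real K > 0" using assms by simp
  have eqc: "cos (pi * real j / real K) = cos (pi * real k / real K)" using assms(4) unfolding cheb_pt_def .
  have "pi * real j / real K = pi * real k / real K"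
    by (rule cos_inj_pi[OF _ _ _ _ eqc]) (use r1 assms in auto)
  then have "pi * real j = pi * real k" using K0 by (simp add: divide_cancel_right)
  then show ?thesis by simp
qed

lemma cheb_pt_range: "cheb_pt K k \<in> {-1..1}"
  by (simp add: cheb_pt_def)

lemma interp_cong:
  assumes "\<And>k. k \<le> K \<Longrightarrow> f (cheb_pt K k) = g (cheb_pt K k)"
  shows "cheb_interp K f t = cheb_interp K g t"
  unfolding cheb_interp_def using assms by (intro sum.cong) auto

lemma interp_exact:
  fixes p :: "real poly"
  assumes K: "K \<ge> 1" and deg: "degree p \<le> K"
  shows "cheb_interp K (\<lambda>t. of_real (poly p t)) t = of_real (poly p t)"
proof -
  let ?x = "cheb_pt K"
  define L where "L = (\<Sum>k\<le>K. smult (poly p (?x k))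
       (\<Prod>j\<in>{..K} - {k}. smult (1 / (?x k - ?x j)) [:- ?x j, 1:]))"
  have polyL: "poly L t = (\<Sum>k\<le>K. poly p (?x k) * (\<Prod>j\<in>{..K} - {k}. (t - ?x j) / (?x k - ?x j)))" for t
    unfolding L_def by (simp add: poly_sum poly_prod diff_divide_distrib)
  have degL: "degree L \<le> K"
    unfolding L_def
  proof (intro degree_sum_le)
    fix k assume k: "k \<in> {..K}"
    have "degree (\<Prod>j\<in>{..K} - {k}. smult (1 / (?x k - ?x j)) [:- ?x j, 1:])
        \<le> (\<Sum>j\<in>{..K} - {k}. degree (smult (1 / (?x k - ?x j)) [:- ?x j, 1:]))"
      using degree_prod_sum_le[where S="{..K} - {k}" and f="\<lambda>j. smult (1 / (?x k - ?x j)) [:- ?x j, 1:]", OF finite_Diff[OF finite_atMost]]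
      by (simp only: o_def)
    also have "\<dots> \<le> (\<Sum>j\<in>{..K} - {k}. 1)"
      by (intro sum_mono) (simp add: degree_smult_le)
    also have "\<dots> = K" using k by simp
    finally show "degree (smult (poly p (?x k)) (\<Prod>j\<in>{..K} - {k}. smult (1 / (?x k - ?x j)) [:- ?x j, 1:])) \<le> K"
      by (rule order_trans[OF degree_smult_le])
  qed simp
  have nodes: "poly L (?x i) = poly p (?x i)" if i: "i \<le> K" for i
  proof -
    define h where "h = (\<lambda>k. poly p (?x k) * (\<Prod>j\<in>{..K} - {k}. (?x i - ?x j) / (?x k - ?x j)))"
    have split: "(\<Sum>k\<le>K. h k) = h i + (\<Sum>k\<in>{..K}-{i}. h k)"
      by (rule sum.remove) (use i in auto)
    have zero: "(\<Sum>k\<in>{..K}-{i}. h k) = 0"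
    proof (rule sum.neutral, rule ballI)
      fix k assume k: "k \<in> {..K} - {i}"
      then have ik: "i \<in> {..K} - {k}" using i by auto
      have "(\<Prod>j\<in>{..K} - {k}. (?x i - ?x j) / (?x k - ?x j)) = 0"
        by (rule prod_zero) (use ik in auto)
      then show "h k = 0" unfolding h_def by simp
    qed
    have one: "(\<Prod>j\<in>{..K} - {i}. (?x i - ?x j) / (?x i - ?x j)) = 1"
    proof (rule prod.neutral, rule ballI)
      fix j assume "j \<in> {..K} - {i}"
      then have "?x i \<noteq> ?x j" using cheb_pt_inj[OF K, of i j] i by auto
      then show "(?x i - ?x j) / (?x i - ?x j) = 1" by simp
    qed
    have "poly L (?x i) = (\<Sum>k\<le>K. h k)" unfolding polyL h_def by (rule refl)
    also have "\<dots> = h i" using split zero by simp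
    also have "\<dots> = poly p (?x i)" unfolding h_def one by simp
    finally show ?thesis .
  qed
  have "L - p = 0"
  proof (rule ccontr)
    assume ne: "L - p \<noteq> 0"
    have sub: "?x ` {..K} \<subseteq> {x. poly (L - p) x = 0}" using nodes by auto
    have "card (?x ` {..K}) = K + 1"
      using cheb_pt_inj[OF K] by (subst card_image) (auto simp: inj_on_def)
    have "card (?x ` {..K}) \<le> card {x. poly (L - p) x = 0}"
      using card_mono[OF poly_roots_finite[OF ne] sub] by simp
    also have "\<dots> \<le> degree (L - p)" by (rule card_poly_roots_bound[OF ne])
    also have "\<dots> \<le> K" using degL deg by (meson degree_diff_le)
    finally show False using \<open>card (?x ` {..K}) = K + 1\<close> by simp
  qed
  then have "L = p" by simp
  then have Lp: "poly L t = poly p t" by simp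
  have "cheb_interp K (\<lambda>t. of_real (poly p t)) t
     = (\<Sum>k\<le>K. of_real (poly p (?x k) * (\<Prod>j\<in>{..K} - {k}. (t - ?x j) / (?x k - ?x j))))"
    unfolding cheb_interp_def by (simp only: of_real_mult)
  also have "\<dots> = of_real (poly L t)" unfolding polyL by (simp only: of_real_sum)
  also have "\<dots> = of_real (poly p t)" using Lp by (simp only:)
  finally show ?thesis .
qed

definition chalias :: "nat \<Rightarrow> nat \<Rightarrow> nat" where
  "chalias K k = (if k mod (2*K) \<le> K then k mod (2*K) else 2*K - k mod (2*K))"

lemma chalias_le: "K \<ge> 1 \<Longrightarrow> chalias K k \<le> K"
  unfolding chalias_def by auto

lemma alias_id: "K \<ge> 1 \<Longrightarrow> k \<le> K \<Longrightarrow> chalias K k = k"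
  unfolding chalias_def by auto

lemma cos_2pi_int: "cos (x + 2 * pi * real (n::nat)) = cos x"
proof (induction n)
  case (Suc n)
  have e: "x + 2 * pi * real (Suc n) = (x + 2 * pi * real n) + 2 * pi" by (simp add: algebra_simps)
  show ?case unfolding e cos_periodic Suc.IH ..
qed simp

lemma alias_node:
  assumes K: "K \<ge> 1"
  shows "poly (cheb k) (cheb_pt K j) = poly (cheb (chalias K k)) (cheb_pt K j)"
proof -
  define m where "m = k mod (2*K)"
  define d where "d = k div (2*K)"
  have k: "k = 2*K*d + m" unfolding m_def d_def by simp
  have m: "m < 2*K" unfolding m_def using K by simp
  have K0: "real K \<noteq> 0" using K by simp
  have c1: "cos (real k * (pi * real j / real K)) = cos (real m * (pi * real j / real K))"
  proof -
    have e: "real k * (pi * real j / real K) = real m * (pi * real j / real K) + 2 * pi * real (d * j)"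
      using K0 by (subst k) (simp add: field_simps)
    show ?thesis unfolding e by (rule cos_2pi_int)
  qed
  have c2: "cos (real (2*K - m) * (pi * real j / real K)) = cos (real m * (pi * real j / real K))"
  proof -
    have e: "real (2*K - m) * (pi * real j / real K) = - (real m * (pi * real j / real K)) + 2 * pi * real j"
      using K0 m by (simp add: of_nat_diff field_simps)
    show ?thesis unfolding e cos_2pi_int cos_minus ..
  qed
  show ?thesis
  proof (cases "m \<le> K")
    case True
    then have "chalias K k = m" unfolding chalias_def m_def by simp
    then show ?thesis unfolding cheb_pt_def cheb_cos using c1 by simp
  next
    case False
    then have "chalias K k = 2*K - m" unfolding chalias_def m_def by simp
    then show ?thesis unfolding cheb_pt_def cheb_cos using c1 c2 by simp
  qed
qed

lemma interp_cheb:
  assumes K: "K \<ge> 1"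
  shows "cheb_interp K (\<lambda>t. of_real (poly (cheb k) t)) t = of_real (poly (cheb (chalias K k)) t)"
proof -
  have "cheb_interp K (\<lambda>t. of_real (poly (cheb k) t)) t = cheb_interp K (\<lambda>t. of_real (poly (cheb (chalias K k)) t)) t"
    by (intro interp_cong arg_cong[where f=of_real] alias_node[OF K])
  also have "\<dots> = of_real (poly (cheb (chalias K k)) t)"
    by (rule interp_exact[OF K]) (meson cheb_degree chalias_le[OF K] order_trans)
  finally show ?thesis .
qed

lemma interp_series:
  fixes f :: "real \<Rightarrow> complex" and a :: "nat \<Rightarrow> complex"
  assumes K: "K \<ge> 1"
    and ser: "\<And>x. x \<in> {-1..1} \<Longrightarrow> (\<lambda>k. a k * of_real (poly (cheb k) x)) sums f x"
  shows "(\<lambda>k. a k * of_real (poly (cheb (chalias K k)) t)) sums cheb_interp K f t"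
proof -
  define c where "c = (\<lambda>j. complex_of_real (\<Prod>i\<in>{..K} - {j}. (t - cheb_pt K i) / (cheb_pt K j - cheb_pt K i)))"
  have "(\<lambda>k. \<Sum>j\<le>K. a k * of_real (poly (cheb k) (cheb_pt K j)) * c j) sums (\<Sum>j\<le>K. f (cheb_pt K j) * c j)"
    by (intro sums_sum sums_mult2 ser cheb_pt_range)
  moreover have "(\<Sum>j\<le>K. a k * of_real (poly (cheb k) (cheb_pt K j)) * c j)
      = a k * of_real (poly (cheb (chalias K k)) t)" for k
  proof -
    have "(\<Sum>j\<le>K. a k * of_real (poly (cheb k) (cheb_pt K j)) * c j)
        = a k * cheb_interp K (\<lambda>t. of_real (poly (cheb k) t)) t"
      unfolding cheb_interp_def c_def by (simp add: sum_distrib_left mult.assoc)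
    also have "\<dots> = a k * of_real (poly (cheb (chalias K k)) t)" by (simp only: interp_cheb[OF K])
    finally show ?thesis .
  qed
  moreover have "(\<Sum>j\<le>K. f (cheb_pt K j) * c j) = cheb_interp K f t"
    unfolding cheb_interp_def c_def ..
  ultimately show ?thesis by simp
qed

lemma interp_bound:
  fixes f :: "real \<Rightarrow> complex" and a :: "nat \<Rightarrow> complex"
  assumes K: "K \<ge> 1" and r: "r > 1"
    and ser: "\<And>x. x \<in> {-1..1} \<Longrightarrow> (\<lambda>k. a k * of_real (poly (cheb k) x)) sums f x"
    and bnd: "\<And>k. k > K \<Longrightarrow> norm (a k) \<le> 2 * M / r ^ k"
    and t: "t \<in> {-1..1}"
  shows "norm (f t - cheb_interp K f t) \<le> 4 * M / (r ^ K * (r - 1))"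
proof -
  have M: "M \<ge> 0"
  proof -
    have "0 \<le> norm (a (Suc K))" by simp
    also have "\<dots> \<le> 2 * M / r ^ Suc K" by (rule bnd) simp
    finally have "0 \<le> 2 * M / r ^ Suc K" .
    moreover have "0 < r ^ Suc K" using r by simp
    ultimately show ?thesis by (simp add: zero_le_divide_iff)
  qed
  define T where "T = (\<lambda>k. a k * (of_real (poly (cheb k) t) - of_real (poly (cheb (chalias K k)) t)))"
  have sT: "T sums (f t - cheb_interp K f t)"
    unfolding T_def right_diff_distrib by (intro sums_diff ser t interp_series K)
  define B where "B = (\<lambda>k. if k \<le> K then 0 else 4 * M * (1/r) ^ k)"
  have TB: "norm (T k) \<le> B k" for k
  proof (cases "k \<le> K")
    case True then show ?thesis by (simp add: T_def B_def alias_id[OF K])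
  next
    case False
    have "norm (of_real (poly (cheb k) t) - of_real (poly (cheb (chalias K k)) t) :: complex)
        \<le> norm (of_real (poly (cheb k) t) :: complex) + norm (of_real (poly (cheb (chalias K k)) t) :: complex)"
      by (rule norm_triangle_ineq4)
    also have "\<dots> \<le> 1 + 1" using cheb_bound[OF t] by (intro add_mono) simp_all
    finally have d: "norm (of_real (poly (cheb k) t) - of_real (poly (cheb (chalias K k)) t) :: complex) \<le> 2" by simp
    have "norm (T k) \<le> (2 * M / r ^ k) * 2"
      unfolding T_def norm_mult using bnd[of k] False d M r by (intro mult_mono) auto
    also have "\<dots> = 4 * M * (1/r) ^ k" by (simp add: power_one_over field_simps)
    finally show ?thesis using False by (simp add: B_def)
  qed
  have geo: "(\<lambda>i. (1/r) ^ i) sums (1 / (1 - 1/r))"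
    by (rule geometric_sums) (use r in simp)
  have "(\<lambda>i. 4 * M * (1/r) ^ (K+1) * (1/r) ^ i) sums (4 * M * (1/r) ^ (K+1) * (1 / (1 - 1/r)))"
    by (rule sums_mult[OF geo])
  moreover have "(\<lambda>i. B (i + (K+1))) = (\<lambda>i. 4 * M * (1/r) ^ (K+1) * (1/r) ^ i)"
    by (simp add: B_def power_add mult_ac)
  ultimately have sB: "B sums (4 * M * (1/r) ^ (K+1) * (1 / (1 - 1/r)))"
    using sums_zero_iff_shift[of "K+1" B] by (simp add: B_def)
  have "norm (f t - cheb_interp K f t) = norm (suminf T)" using sums_unique[OF sT] by simp
  also have "\<dots> \<le> suminf B" by (rule norm_suminf_le[OF TB sums_summable[OF sB]])
  also have "\<dots> = 4 * M * (1/r) ^ (K+1) * (1 / (1 - 1/r))" using sums_unique[OF sB] by simp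
  also have "\<dots> = 4 * M / (r ^ K * (r - 1))" using r by (simp add: field_simps power_one_over)
  finally show ?thesis .
qed

lemma circ_sums:
  fixes f :: "nat \<Rightarrow> complex \<Rightarrow> complex"
  assumes R: "R > 0" and cont: "\<And>k. continuous_on (sphere 0 R) (f k)"
    and bd: "\<And>k z. z \<in> sphere 0 R \<Longrightarrow> norm (f k z) \<le> Mk k" and sm: "summable Mk"
    and sF: "\<And>z. z \<in> sphere 0 R \<Longrightarrow> (\<lambda>k. f k z) sums F z"
  shows "(\<lambda>k. contour_integral (circlepath 0 R) (f k)) sums contour_integral (circlepath 0 R) F"
proof -
  have pim: "path_image (circlepath 0 R) = sphere 0 R" using R by (simp add: path_image_circlepath_nonneg)
  have ul: "uniform_limit (sphere 0 R) (\<lambda>n z. \<Sum>i<n. f i z) (\<lambda>z. suminf (\<lambda>i. f i z)) sequentially"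
    by (rule Weierstrass_m_test[OF bd sm])
  have int: "f k contour_integrable_on circlepath 0 R" for k
    using cont[of k] R by (intro contour_integrable_continuous_circlepath) simp
  have ints: "\<forall>\<^sub>F n in sequentially. (\<lambda>z. \<Sum>i<n. f i z) contour_integrable_on circlepath 0 R"
    by (intro always_eventually allI contour_integrable_sum int) simp
  have lim: "((\<lambda>n. contour_integral (circlepath 0 R) (\<lambda>z. \<Sum>i<n. f i z)) \<longlongrightarrow>
              contour_integral (circlepath 0 R) (\<lambda>z. suminf (\<lambda>i. f i z))) sequentially"
    by (rule contour_integral_uniform_limit_circlepath(2)[OF ints ul _ R]) simp
  have eq1: "contour_integral (circlepath 0 R) (\<lambda>z. \<Sum>i<n. f i z) = (\<Sum>i<n. contour_integral (circlepath 0 R) (f i))" for n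
    by (rule contour_integral_sum) (auto simp: int)
  have eq2: "contour_integral (circlepath 0 R) (\<lambda>z. suminf (\<lambda>i. f i z)) = contour_integral (circlepath 0 R) F"
  proof (rule contour_integral_eq)
    fix z assume "z \<in> path_image (circlepath 0 R)"
    then have "(\<lambda>k. f k z) sums F z" using sF pim R by (simp add: abs_of_pos)
    then show "suminf (\<lambda>i. f i z) = F z" by (rule sums_unique[symmetric])
  qed
  show ?thesis unfolding sums_def using lim unfolding eq1 eq2 .
qed

lemma segment_annulus:
  fixes e :: complex
  assumes e: "norm e = 1" and s: "0 < s1" "s1 \<le> s2"
  shows "closed_segment (of_real s2 * e) (of_real s1 * e) \<subseteq> {z. s1 \<le> norm z \<and> norm z \<le> s2}"
proof
  fix z assume "z \<in> closed_segment (of_real s2 * e) (of_real s1 * e)"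
  then obtain u where u: "0 \<le> u" "u \<le> 1" and z: "z = (1 - u) *\<^sub>R (of_real s2 * e) + u *\<^sub>R (of_real s1 * e)"
    unfolding closed_segment_def by auto
  define c where "c = (1 - u) * s2 + u * s1"
  have zc: "z = of_real c * e" unfolding z c_def by (simp add: scaleR_conv_of_real algebra_simps)
  have c0: "0 \<le> c" unfolding c_def using u s by simp
  have "norm z = abs c * norm e" by (simp only: zc norm_mult norm_of_real)
  then have nz: "norm z = (1 - u) * s2 + u * s1" using e c0 unfolding c_def by simp
  have "s1 = (1 - u) * s1 + u * s1" by (simp add: algebra_simps)
  also have "\<dots> \<le> (1 - u) * s2 + u * s1" using u s by (intro add_right_mono mult_left_mono) auto
  finally have 1: "s1 \<le> norm z" using nz by simp
  have "(1 - u) * s2 + u * s1 \<le> (1 - u) * s2 + u * s2" using u s by (intro add_left_mono mult_left_mono) auto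
  also have "\<dots> = s2" by (simp add: algebra_simps)
  finally have 2: "norm z \<le> s2" using nz by simp
  show "z \<in> {z. s1 \<le> norm z \<and> norm z \<le> s2}" using 1 2 by simp
qed

lemma circlepath0: "circlepath 0 R t = of_real R * exp (2 * of_real pi * \<i> * of_real t)"
  by (simp add: circlepath)

lemma cauchy_annulus:
  fixes g :: "complex \<Rightarrow> complex"
  assumes r: "1 < r" "r < \<rho>"
    and hol: "g holomorphic_on (ball 0 \<rho> - cball 0 (1/\<rho>))"
    and w: "1/r < cmod w" "cmod w < r"
  shows "contour_integral (circlepath 0 r) (\<lambda>z. g z / (z - w))
       - contour_integral (circlepath 0 (1/r)) (\<lambda>z. g z / (z - w)) = 2 * pi * \<i> * g w"
proof -
  define A where "A = ball 0 \<rho> - cball (0::complex) (1/\<rho>)"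
  have oA: "open A" unfolding A_def by (intro open_Diff open_ball closed_cball)
  have rp: "r > 0" "1/r > 0" using r by auto
  have r1: "1/r < 1" using r by simp
  have rr: "1/r < r" using r1 r by linarith
  have inA: "z \<in> A" if "1/r \<le> cmod z" "cmod z \<le> r" for z
  proof -
    have "1/\<rho> < 1/r" using r by (simp add: frac_less2)
    then show ?thesis unfolding A_def using that r by auto
  qed
  have wA: "w \<in> A" using inA w by simp
  define h where "h = (\<lambda>z. if z = w then deriv g w else (g z - g w) / (z - w))"
  have holh: "h holomorphic_on A" unfolding h_def using pole_lemma_open[OF hol[folded A_def] oA] .
  have hom: "homotopic_loops A (circlepath 0 r) (circlepath 0 (1/r))"
  proof (rule homotopic_loops_linear)
    fix t :: real assume "t \<in> {0..1}"
    define e where "e = exp (2 * of_real pi * \<i> * of_real t)"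
    have ne: "norm e = 1" unfolding e_def by (simp add: norm_exp_eq_Re)
    have "closed_segment (of_real r * e) (of_real (1/r) * e) \<subseteq> {z. 1/r \<le> norm z \<and> norm z \<le> r}"
      by (rule segment_annulus[OF ne rp(2)]) (use rr in simp)
    then show "closed_segment (circlepath 0 r t) (circlepath 0 (1/r) t) \<subseteq> A"
      unfolding circlepath0 e_def[symmetric] using inA by blast
  qed auto
  have eqh: "contour_integral (circlepath 0 r) h = contour_integral (circlepath 0 (1/r)) h"
    by (rule Cauchy_theorem_homotopic_loops[OF hom oA holh]) auto
  have contg: "continuous_on A g" using hol holomorphic_on_imp_continuous_on unfolding A_def by blast
  have split: "contour_integral (circlepath 0 R) h
      = contour_integral (circlepath 0 R) (\<lambda>z. g z / (z - w)) - contour_integral (circlepath 0 R) (\<lambda>z. g w / (z - w))"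
    if R: "R > 0" "1/r \<le> R" "R \<le> r" "R \<noteq> cmod w" for R
  proof -
    have pim: "path_image (circlepath 0 R) = sphere 0 R" using R by (simp add: path_image_circlepath_nonneg)
    have sA: "sphere 0 R \<subseteq> A" using inA R by auto
    have nw: "z \<noteq> w" if "z \<in> sphere 0 R" for z using that R by auto
    have c1: "continuous_on (sphere 0 R) (\<lambda>z. g z / (z - w))"
      using nw by (intro continuous_intros continuous_on_subset[OF contg sA]) auto
    have c2: "continuous_on (sphere 0 R) (\<lambda>z. g w / (z - w))"
      using nw by (intro continuous_intros) auto
    have "contour_integral (circlepath 0 R) h = contour_integral (circlepath 0 R) (\<lambda>z. g z / (z - w) - g w / (z - w))"
      by (rule contour_integral_eq) (use nw pim R in \<open>auto simp: h_def diff_divide_distrib abs_of_pos\<close>)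
    also have "\<dots> = contour_integral (circlepath 0 R) (\<lambda>z. g z / (z - w)) - contour_integral (circlepath 0 R) (\<lambda>z. g w / (z - w))"
      by (rule contour_integral_diff) (use c1 c2 pim in \<open>auto intro: contour_integrable_continuous_circlepath\<close>)
    finally show ?thesis .
  qed
  have o1: "contour_integral (circlepath 0 r) (\<lambda>z. g w / (z - w)) = 2 * pi * \<i> * g w"
  proof (rule contour_integral_unique)
    show "((\<lambda>z. g w / (z - w)) has_contour_integral 2 * pi * \<i> * g w) (circlepath 0 r)"
      using Cauchy_integral_circlepath[of 0 r "\<lambda>_. g w" w] w by simp
  qed
  have o2: "contour_integral (circlepath 0 (1/r)) (\<lambda>z. g w / (z - w)) = 0"
  proof (rule contour_integral_unique, rule Cauchy_theorem_convex_simple)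
    show "(\<lambda>z. g w / (z - w)) holomorphic_on ball 0 (cmod w)"
      by (intro holomorphic_intros) auto
    show "path_image (circlepath 0 (1/r)) \<subseteq> ball 0 (cmod w)"
      using rp w by (auto simp: path_image_circlepath_nonneg)
  qed auto
  have "contour_integral (circlepath 0 r) (\<lambda>z. g z / (z - w)) - 2 * pi * \<i> * g w
      = contour_integral (circlepath 0 (1/r)) (\<lambda>z. g z / (z - w))"
    using rr eqh split[of r] split[of "1/r"] o1 o2 rp w by simp
  then show ?thesis by (simp add: diff_eq_eq algebra_simps)
qed

lemma sums_eq_fun: "f sums s \<Longrightarrow> (\<And>k. f k = g k) \<Longrightarrow> s = t \<Longrightarrow> g sums t"
  by (metis ext)

lemma outer_series:
  fixes g :: "complex \<Rightarrow> complex"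
  assumes R: "R > 0" and w: "cmod w < R" and contg: "continuous_on (sphere 0 R) g"
    and bd: "\<And>z. z \<in> sphere 0 R \<Longrightarrow> norm (g z) \<le> M"
  shows "(\<lambda>k. w^k * contour_integral (circlepath 0 R) (\<lambda>z. g z / z^(Suc k)))
           sums contour_integral (circlepath 0 R) (\<lambda>z. g z / (z - w))"
proof -
  have nz: "z \<noteq> 0" if "z \<in> sphere 0 R" for z using that R by auto
  have pim: "path_image (circlepath 0 R) = sphere 0 R" using R by (simp add: path_image_circlepath_nonneg)
  have contk: "continuous_on (sphere 0 R) (\<lambda>z. g z / z^(Suc k))" for k
    using nz by (intro continuous_intros contg) auto
  have intk: "(\<lambda>z. g z / z^(Suc k)) contour_integrable_on circlepath 0 R" for k
    by (rule contour_integrable_continuous_circlepath) (use contk[of k] R in \<open>simp add: abs_of_pos\<close>)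
  define f where "f = (\<lambda>k z. w^k * (g z / z^(Suc k)))"
  define Mk where "Mk = (\<lambda>k::nat. M / R * (cmod w / R)^k)"
  have "(\<lambda>k. contour_integral (circlepath 0 R) (f k)) sums contour_integral (circlepath 0 R) (\<lambda>z. g z / (z - w))"
  proof (rule circ_sums[OF R, where Mk = Mk])
    show "continuous_on (sphere 0 R) (f k)" for k unfolding f_def by (intro continuous_intros contk)
    show "norm (f k z) \<le> Mk k" if z: "z \<in> sphere 0 R" for k z
    proof -
      have nzR: "norm z = R" using z by simp
      have "norm (f k z) = cmod w ^ k * (norm (g z) / R ^ Suc k)"
        unfolding f_def by (simp add: norm_mult norm_divide norm_power nzR)
      also have "\<dots> \<le> cmod w ^ k * (M / R ^ Suc k)"
        using bd[OF z] R by (intro mult_left_mono divide_right_mono) auto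
      also have "\<dots> = Mk k" unfolding Mk_def by (simp add: power_divide field_simps)
      finally show ?thesis .
    qed
    show "summable Mk" unfolding Mk_def
      using w R by (intro summable_mult summable_geometric) simp
    show "(\<lambda>k. f k z) sums (g z / (z - w))" if z: "z \<in> sphere 0 R" for z
    proof -
      have zn: "z \<noteq> 0" using nz z .
      have nzR: "norm z = R" using z by simp
      have zw: "z \<noteq> w" using w nzR by auto
      have "norm (w / z) < 1" using w R by (simp add: norm_divide nzR)
      then have "(\<lambda>k. (w / z)^k) sums (1 / (1 - w / z))" by (rule geometric_sums)
      then have "(\<lambda>k. g z / z * (w / z)^k) sums (g z / z * (1 / (1 - w / z)))" by (rule sums_mult)
      moreover have "g z / z * (w / z)^k = f k z" for k
        unfolding f_def using zn by (simp add: power_divide field_simps)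
      moreover have "g z / z * (1 / (1 - w / z)) = g z / (z - w)"
        using zn zw by (simp add: field_simps)
      ultimately show ?thesis by (rule sums_eq_fun)
    qed
  qed
  moreover have "contour_integral (circlepath 0 R) (f k) = w^k * contour_integral (circlepath 0 R) (\<lambda>z. g z / z^(Suc k))" for k
    unfolding f_def by (rule contour_integral_lmul[OF intk])
  ultimately show ?thesis by simp
qed

lemma inner_series:
  fixes g :: "complex \<Rightarrow> complex"
  assumes R: "R > 0" and w: "R < cmod w" and contg: "continuous_on (sphere 0 R) g"
    and bd: "\<And>z. z \<in> sphere 0 R \<Longrightarrow> norm (g z) \<le> M"
  shows "(\<lambda>k. contour_integral (circlepath 0 R) (\<lambda>z. g z * z^k) * (1 / w^(Suc k)))
           sums (- contour_integral (circlepath 0 R) (\<lambda>z. g z / (z - w)))"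
proof -
  have pim: "path_image (circlepath 0 R) = sphere 0 R" using R by (simp add: path_image_circlepath_nonneg)
  have w0: "w \<noteq> 0" using w R by auto
  have contk: "continuous_on (sphere 0 R) (\<lambda>z. g z * z^k)" for k
    by (intro continuous_intros contg)
  have intk: "(\<lambda>z. g z * z^k) contour_integrable_on circlepath 0 R" for k
    by (rule contour_integrable_continuous_circlepath) (use contk[of k] R in \<open>simp add: abs_of_pos\<close>)
  define f where "f = (\<lambda>k z. g z * z^k * (1 / w^(Suc k)))"
  define Mk where "Mk = (\<lambda>k::nat. M / cmod w * (R / cmod w)^k)"
  have "(\<lambda>k. contour_integral (circlepath 0 R) (f k)) sums contour_integral (circlepath 0 R) (\<lambda>z. - (g z / (z - w)))"
  proof (rule circ_sums[OF R, where Mk = Mk])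
    show "continuous_on (sphere 0 R) (f k)" for k unfolding f_def by (intro continuous_intros contk)
    show "norm (f k z) \<le> Mk k" if z: "z \<in> sphere 0 R" for k z
    proof -
      have nzR: "norm z = R" using z by simp
      have "norm (f k z) = norm (g z) * (R ^ k / cmod w ^ Suc k)"
        unfolding f_def by (simp add: norm_mult norm_divide norm_power nzR)
      also have "\<dots> \<le> M * (R ^ k / cmod w ^ Suc k)"
        using bd[OF z] R by (intro mult_right_mono) auto
      also have "\<dots> = Mk k" unfolding Mk_def by (simp add: power_divide field_simps)
      finally show ?thesis .
    qed
    show "summable Mk" unfolding Mk_def
      using w R by (intro summable_mult summable_geometric) (simp add: divide_less_eq_1)
    show "(\<lambda>k. f k z) sums (- (g z / (z - w)))" if z: "z \<in> sphere 0 R" for z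
    proof -
      have nzR: "norm z = R" using z by simp
      have zw: "z \<noteq> w" using w nzR by auto
      have "norm (z / w) < 1" using w R by (simp add: norm_divide nzR divide_less_eq_1)
      then have "(\<lambda>k. (z / w)^k) sums (1 / (1 - z / w))" by (rule geometric_sums)
      then have "(\<lambda>k. g z / w * (z / w)^k) sums (g z / w * (1 / (1 - z / w)))" by (rule sums_mult)
      moreover have "g z / w * (z / w)^k = f k z" for k
        unfolding f_def using w0 by (simp add: power_divide field_simps)
      moreover have "g z / w * (1 / (1 - z / w)) = - (g z / (z - w))"
        using w0 zw by (simp add: field_simps)
      ultimately show ?thesis by (rule sums_eq_fun)
    qed
  qed
  moreover have "contour_integral (circlepath 0 R) (f k) = contour_integral (circlepath 0 R) (\<lambda>z. g z * z^k) * (1 / w^(Suc k))" for k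
    unfolding f_def by (rule contour_integral_rmul[OF intk])
  moreover have "contour_integral (circlepath 0 R) (\<lambda>z. - (g z / (z - w))) = - contour_integral (circlepath 0 R) (\<lambda>z. g z / (z - w))"
    by (rule contour_integral_neg)
  ultimately show ?thesis by simp
qed

lemma coef_bound_outer:
  fixes g :: "complex \<Rightarrow> complex"
  assumes R: "R > 0" and contg: "continuous_on (sphere 0 R) g"
    and bd: "\<And>z. z \<in> sphere 0 R \<Longrightarrow> norm (g z) \<le> M" and M: "M \<ge> 0"
  shows "norm (contour_integral (circlepath 0 R) (\<lambda>z. g z / z^(Suc k))) \<le> 2 * pi * M / R^k"
proof -
  have nz: "z \<noteq> 0" if "z \<in> sphere 0 R" for z using that R by auto
  have pim: "path_image (circlepath 0 R) = sphere 0 R" using R by (simp add: path_image_circlepath_nonneg)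
  have contk: "continuous_on (sphere 0 R) (\<lambda>z. g z / z^(Suc k))"
    using nz by (intro continuous_intros contg) auto
  have intk: "(\<lambda>z. g z / z^(Suc k)) contour_integrable_on circlepath 0 R"
    by (rule contour_integrable_continuous_circlepath) (use contk R in \<open>simp add: abs_of_pos\<close>)
  have "norm (contour_integral (circlepath 0 R) (\<lambda>z. g z / z^(Suc k))) \<le> M / R^(Suc k) * (2 * pi * R)"
  proof (rule has_contour_integral_bound_circlepath[OF has_contour_integral_integral[OF intk]])
    show "0 \<le> M / R^(Suc k)" using M R by simp
    show "norm (g x / x^(Suc k)) \<le> M / R^(Suc k)" if "norm (x - 0) = R" for x
    proof -
      have "x \<in> sphere 0 R" using that by simp
      then show ?thesis using bd[of x] that R by (simp add: norm_divide norm_mult norm_power divide_right_mono)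
    qed
  qed (use R in auto)
  also have "\<dots> = 2 * pi * M / R^k" using R by (simp add: field_simps)
  finally show ?thesis .
qed

lemma coef_bound_inner:
  fixes g :: "complex \<Rightarrow> complex"
  assumes R: "R > 0" and contg: "continuous_on (sphere 0 R) g"
    and bd: "\<And>z. z \<in> sphere 0 R \<Longrightarrow> norm (g z) \<le> M" and M: "M \<ge> 0"
  shows "norm (contour_integral (circlepath 0 R) (\<lambda>z. g z * z^k)) \<le> 2 * pi * M * R^(Suc k)"
proof -
  have pim: "path_image (circlepath 0 R) = sphere 0 R" using R by (simp add: path_image_circlepath_nonneg)
  have contk: "continuous_on (sphere 0 R) (\<lambda>z. g z * z^k)"
    by (intro continuous_intros contg)
  have intk: "(\<lambda>z. g z * z^k) contour_integrable_on circlepath 0 R"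
    by (rule contour_integrable_continuous_circlepath) (use contk R in \<open>simp add: abs_of_pos\<close>)
  have "norm (contour_integral (circlepath 0 R) (\<lambda>z. g z * z^k)) \<le> M * R^k * (2 * pi * R)"
  proof (rule has_contour_integral_bound_circlepath[OF has_contour_integral_integral[OF intk]])
    show "0 \<le> M * R^k" using M R by simp
    show "norm (g x * x^k) \<le> M * R^k" if "norm (x - 0) = R" for x
    proof -
      have "x \<in> sphere 0 R" using that by simp
      then show ?thesis using bd[of x] that R by (simp add: norm_mult norm_power mult_right_mono)
    qed
  qed (use R in auto)
  also have "\<dots> = 2 * pi * M * R^(Suc k)" by (simp add: field_simps)
  finally show ?thesis .
qed

lemma cis_plus_cis_neg: "cis a + cis (-a) = of_real (2 * cos a)"
  by (simp add: complex_eq_iff)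

lemma cheb_expansion:
  fixes g :: "complex \<Rightarrow> complex"
  assumes r: "1 < r" "r < \<rho>"
    and hol: "g holomorphic_on (ball 0 \<rho> - cball 0 (1/\<rho>))"
    and bd: "\<And>w. w \<in> ball 0 \<rho> - cball 0 (1/\<rho>) \<Longrightarrow> norm (g w) \<le> M"
    and sym: "\<And>\<theta>. g (cis (-\<theta>)) = g (cis \<theta>)"
    and M: "M \<ge> 0"
  obtains a where "\<And>k. k \<ge> 1 \<Longrightarrow> norm (a k) \<le> 2 * M / r^k"
    "\<And>\<theta>. (\<lambda>k. a k * of_real (cos (real k * \<theta>))) sums g (cis \<theta>)"
proof -
  define A where "A = ball 0 \<rho> - cball (0::complex) (1/\<rho>)"
  define ri where "ri = 1 / r"
  have rp: "r > 0" "ri > 0" using r by (auto simp: ri_def)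
  have r1: "ri < 1" using r by (simp add: ri_def)
  have inA: "z \<in> A" if "ri \<le> cmod z" "cmod z \<le> r" for z
  proof -
    have "1/\<rho> < 1/r" using r by (simp add: frac_less2)
    then show ?thesis using that r unfolding A_def ri_def by auto
  qed
  have contA: "continuous_on A g" using hol holomorphic_on_imp_continuous_on unfolding A_def by blast
  have sph: "sphere 0 R \<subseteq> A" if "ri \<le> R" "R \<le> r" for R using inA that by auto
  have cont_r: "continuous_on (sphere 0 r) g" by (rule continuous_on_subset[OF contA sph]) (use r1 r in auto)
  have cont_ri: "continuous_on (sphere 0 ri) g" by (rule continuous_on_subset[OF contA sph]) (use r1 r in auto)
  have bd_r: "norm (g z) \<le> M" if "z \<in> sphere 0 r" for z using bd sph[of r] that r1 r unfolding A_def by auto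
  have bd_ri: "norm (g z) \<le> M" if "z \<in> sphere 0 ri" for z using bd sph[of ri] that r1 r unfolding A_def by auto
  define C where "C = (\<lambda>k. contour_integral (circlepath 0 r) (\<lambda>z. g z / z^(Suc k)))"
  define D where "D = (\<lambda>k. contour_integral (circlepath 0 ri) (\<lambda>z. g z * z^k))"
  define P where "P = (\<lambda>w. contour_integral (circlepath 0 r) (\<lambda>z. g z / (z - w)))"
  define Q where "Q = (\<lambda>w. contour_integral (circlepath 0 ri) (\<lambda>z. g z / (z - w)))"
  have key1: "(\<lambda>k. w^k * C k) sums P w" if "cmod w = 1" for w
    unfolding C_def P_def using that r by (intro outer_series[OF rp(1) _ cont_r bd_r]) auto
  have key2: "(\<lambda>k. D k * (1 / w^(Suc k))) sums (- Q w)" if "cmod w = 1" for w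
    unfolding D_def Q_def using that r1 by (intro inner_series[OF rp(2) _ cont_ri bd_ri]) auto
  have key3: "P w - Q w = 2 * pi * \<i> * g w" if "cmod w = 1" for w
    unfolding P_def Q_def ri_def using that r by (intro cauchy_annulus[OF r hol]) auto
  define c where "c = (\<lambda>k. C k / (2 * pi * \<i>))"
  define d where "d = (\<lambda>k. D k / (2 * pi * \<i>))"
  define a where "a = (\<lambda>k. c k + (if k = 0 then 0 else d (k - 1)))"
  show ?thesis
  proof (rule that[of a])
    fix k :: nat assume k: "k \<ge> 1"
    have nC: "norm (C k) \<le> 2 * pi * M / r^k"
      unfolding C_def by (rule coef_bound_outer[OF rp(1) cont_r bd_r M])
    have nD: "norm (D (k - 1)) \<le> 2 * pi * M * ri^(Suc (k - 1))"
      unfolding D_def by (rule coef_bound_inner[OF rp(2) cont_ri bd_ri M])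
    have ri_k: "ri^(Suc (k - 1)) = 1 / r^k" using k by (simp add: ri_def power_one_over)
    have n2: "norm (2 * pi * \<i>) = 2 * pi" by (simp add: norm_mult)
    have "norm (c k) \<le> M / r^k"
      using nC unfolding c_def norm_divide n2 by (simp add: field_simps)
    moreover have "norm (d (k - 1)) \<le> M / r^k"
      using nD unfolding d_def norm_divide n2 ri_k by (simp add: field_simps)
    ultimately have "norm (c k) + norm (d (k - 1)) \<le> 2 * M / r^k" by simp
    moreover have "norm (a k) \<le> norm (c k) + norm (d (k - 1))"
      unfolding a_def using k by (simp add: norm_triangle_ineq)
    ultimately show "norm (a k) \<le> 2 * M / r^k" by linarith
  next
    fix \<theta> :: real
    define w where "w = cis \<theta>"
    define w' where "w' = cis (- \<theta>)"
    have nw: "cmod w = 1" "cmod w' = 1" by (simp_all add: w_def w'_def)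
    have pw: "w^k + w'^k = of_real (2 * cos (real k * \<theta>))" for k
    proof -
      have e1: "w^k = cis (real k * \<theta>)" unfolding w_def by (rule Complex.DeMoivre)
      have e2: "w'^k = cis (- (real k * \<theta>))" unfolding w'_def Complex.DeMoivre[of "-\<theta>" k] by (simp only: mult_minus_right)
      show ?thesis unfolding e1 e2 cis_plus_cis_neg ..
    qed
    have pw2: "1 / w^(Suc k) + 1 / w'^(Suc k) = of_real (2 * cos (real (Suc k) * \<theta>))" for k
    proof -
      have e1: "1 / w^(Suc k) = cis (- (real (Suc k) * \<theta>))"
        unfolding w_def Complex.DeMoivre[of \<theta> "Suc k"] cis_inverse[symmetric] by (rule inverse_eq_divide[symmetric])
      have e2a: "w'^(Suc k) = cis (real (Suc k) * -\<theta>)" unfolding w'_def by (rule Complex.DeMoivre)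
      have e2: "1 / w'^(Suc k) = cis (- (real (Suc k) * (-\<theta>)))"
        unfolding e2a cis_inverse[symmetric] by (rule inverse_eq_divide[symmetric])
      have e3: "- (real (Suc k) * (-\<theta>)) = real (Suc k) * \<theta>" by (simp only: mult_minus_right minus_minus)
      show ?thesis unfolding e1 e2 e3 using cis_plus_cis_neg[of "real (Suc k) * \<theta>"] by (simp only: add.commute)
    qed
    have S1: "(\<lambda>k. (w^k + w'^k) * C k) sums (P w + P w')"
      by (rule sums_eq_fun[OF sums_add[OF key1[OF nw(1)] key1[OF nw(2)]]]) (simp_all add: algebra_simps)
    have S2: "(\<lambda>k. D k * (1 / w^(Suc k) + 1 / w'^(Suc k))) sums (- Q w + - Q w')"
      by (rule sums_eq_fun[OF sums_add[OF key2[OF nw(1)] key2[OF nw(2)]]]) (simp_all add: algebra_simps)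
    have nz: "(4 * pi * \<i>) \<noteq> 0" by simp
    have S1': "(\<lambda>k. of_real (2 * cos (real k * \<theta>)) * C k) sums (P w + P w')"
      using S1 unfolding pw .
    have S2': "(\<lambda>k. D k * of_real (2 * cos (real (Suc k) * \<theta>))) sums (- Q w + - Q w')"
      using S2 unfolding pw2 .
    have T1: "(\<lambda>k. c k * of_real (cos (real k * \<theta>))) sums ((P w + P w') / (4 * pi * \<i>))"
      by (rule sums_eq_fun[OF sums_divide[OF S1', of "4 * pi * \<i>"]]) (simp_all add: c_def field_simps)
    have T2: "(\<lambda>k. d k * of_real (cos (real (Suc k) * \<theta>))) sums ((- Q w + - Q w') / (4 * pi * \<i>))"
      by (rule sums_eq_fun[OF sums_divide[OF S2', of "4 * pi * \<i>"]]) (simp_all add: d_def field_simps del: of_nat_Suc)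
    define e where "e = (\<lambda>k. (if k = 0 then 0 else d (k - 1)) * of_real (cos (real k * \<theta>)))"
    have "(\<lambda>k. e (Suc k)) sums ((- Q w + - Q w') / (4 * pi * \<i>))"
      using T2 unfolding e_def by simp
    then have "e sums ((- Q w + - Q w') / (4 * pi * \<i>) + e 0)"
      by (simp only: sums_Suc_iff)
    moreover have "e 0 = 0" by (simp add: e_def)
    ultimately have T2': "e sums ((- Q w + - Q w') / (4 * pi * \<i>))" by simp
    have tot: "(P w + P w') / (4 * pi * \<i>) + (- Q w + - Q w') / (4 * pi * \<i>) = g (cis \<theta>)"
    proof -
      have "(P w + P w') / (4 * pi * \<i>) + (- Q w + - Q w') / (4 * pi * \<i>)
          = ((P w - Q w) + (P w' - Q w')) / (4 * pi * \<i>)" by (simp add: field_simps)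
      also have "\<dots> = (2 * pi * \<i> * g w + 2 * pi * \<i> * g w') / (4 * pi * \<i>)"
        using key3[OF nw(1)] key3[OF nw(2)] by simp
      also have "g w' = g w" unfolding w_def w'_def by (rule sym)
      finally show ?thesis by (simp add: w_def field_simps)
    qed
    show "(\<lambda>k. a k * of_real (cos (real k * \<theta>))) sums g (cis \<theta>)"
      by (rule sums_eq_fun[OF sums_add[OF T1 T2'] _ tot]) (simp add: a_def e_def algebra_simps)
  qed
qed

lemma ell_alg:
  fixes x y d1 d2 A :: real
  assumes d1: "d1\<^sup>2 = (x - 1)\<^sup>2 + y\<^sup>2" and d2: "d2\<^sup>2 = (x + 1)\<^sup>2 + y\<^sup>2"
    and pos: "d1 \<ge> 0" "d2 \<ge> 0"
    and tri1: "d2 - d1 \<le> 2" and tri2: "d1 - d2 \<le> 2" and S2: "2 \<le> d1 + d2"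
    and SA: "d1 + d2 < 2 * A"
  shows "(A\<^sup>2 - 1) * x\<^sup>2 + A\<^sup>2 * y\<^sup>2 \<le> A\<^sup>2 * (A\<^sup>2 - 1)"
proof -
  define a where "a = (d1 + d2) / 2"
  have a1: "a \<ge> 1" using S2 unfolding a_def by simp
  have aA: "a < A" using SA unfolding a_def by simp
  have a0: "a > 0" using a1 by simp
  have diff: "(d2 - d1) * (d1 + d2) = 4 * x"
  proof -
    have "(d2 - d1) * (d1 + d2) = d2\<^sup>2 - d1\<^sup>2" by (simp add: power2_eq_square algebra_simps)
    also have "\<dots> = 4 * x" unfolding d1 d2 by (simp add: power2_eq_square algebra_simps)
    finally show ?thesis .
  qed
  have dd: "d2 - d1 = 2 * x / a" using diff a0 unfolding a_def by (simp add: field_simps)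
  have d2a: "d2 = a + x / a" using dd unfolding a_def by (simp add: field_simps)
  have xa: "\<bar>x\<bar> \<le> a"
  proof -
    have "\<bar>2 * x / a\<bar> \<le> 2" using dd tri1 tri2 by linarith
    then have "2 * \<bar>x\<bar> / a \<le> 2" using a0 by (simp add: abs_mult)
    then show ?thesis using a0 by (simp add: divide_le_eq)
  qed
  have x2: "x\<^sup>2 \<le> a\<^sup>2" using xa a0 by (metis abs_le_square_iff abs_of_pos)
  have ay: "a\<^sup>2 * y\<^sup>2 = (a\<^sup>2 - 1) * (a\<^sup>2 - x\<^sup>2)"
  proof -
    have "y\<^sup>2 = d2\<^sup>2 - (x + 1)\<^sup>2" using d2 by simp
    also have "\<dots> = (a + x / a)\<^sup>2 - (x + 1)\<^sup>2" using d2a by simp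
    finally have "a\<^sup>2 * y\<^sup>2 = a\<^sup>2 * ((a + x / a)\<^sup>2 - (x + 1)\<^sup>2)" by simp
    also have "\<dots> = (a\<^sup>2 - 1) * (a\<^sup>2 - x\<^sup>2)" using a0 by (simp add: power2_eq_square field_simps)
    finally show ?thesis .
  qed
  have A2: "a\<^sup>2 \<le> A\<^sup>2" using aA a0 by (simp add: power_mono)
  have "a\<^sup>2 * ((A\<^sup>2 - 1) * x\<^sup>2 + A\<^sup>2 * y\<^sup>2) = (A\<^sup>2 - 1) * a\<^sup>2 * x\<^sup>2 + A\<^sup>2 * (a\<^sup>2 * y\<^sup>2)"
    by (simp add: algebra_simps)
  also have "\<dots> = (A\<^sup>2 - 1) * a\<^sup>2 * x\<^sup>2 + A\<^sup>2 * ((a\<^sup>2 - 1) * (a\<^sup>2 - x\<^sup>2))" by (simp only: ay)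
  also have "\<dots> = x\<^sup>2 * (A\<^sup>2 - a\<^sup>2) + A\<^sup>2 * a\<^sup>2 * (a\<^sup>2 - 1)" by (simp add: algebra_simps)
  also have "\<dots> \<le> a\<^sup>2 * (A\<^sup>2 - a\<^sup>2) + A\<^sup>2 * a\<^sup>2 * (a\<^sup>2 - 1)"
    using x2 A2 by (intro add_right_mono mult_right_mono) auto
  also have "\<dots> = a\<^sup>2 * (a\<^sup>2 * (A\<^sup>2 - 1))" by (simp add: algebra_simps)
  also have "\<dots> \<le> a\<^sup>2 * (A\<^sup>2 * (A\<^sup>2 - 1))"
  proof -
    have "A\<^sup>2 - 1 \<ge> 0" using A2 a1 by (smt (verit) one_le_power)
    then show ?thesis using A2 a0 by (intro mult_left_mono mult_right_mono) auto
  qed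
  finally show ?thesis using a0 by (simp add: mult_le_cancel_left_pos)
qed

lemma cs2: fixes u1 u2 v1 v2 :: real
  shows "(u1 * v1 + u2 * v2)\<^sup>2 \<le> (u1\<^sup>2 + u2\<^sup>2) * (v1\<^sup>2 + v2\<^sup>2)"
proof -
  have "(u1\<^sup>2 + u2\<^sup>2) * (v1\<^sup>2 + v2\<^sup>2) = (u1 * v1 + u2 * v2)\<^sup>2 + (u1 * v2 - u2 * v1)\<^sup>2"
    by (simp add: power2_eq_square algebra_simps)
  then show ?thesis by simp
qed

lemma sq_ident: fixes p q X Y :: real
  shows "p\<^sup>2 * X\<^sup>2 + q\<^sup>2 * Y\<^sup>2 = 2\<^sup>2 * ((X / 2 * p)\<^sup>2 + (- (Y / 2) * q)\<^sup>2)"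
  by (simp add: power2_eq_square field_simps)

lemma ell_bound:
  fixes z lam :: complex and \<rho> :: real
  assumes \<rho>: "\<rho> > 1" and z: "z \<in> bernstein_ellipse \<rho>"
  shows "Re (z * lam) \<le> sqrt ((Re lam)\<^sup>2 * (\<rho> + inverse \<rho>)\<^sup>2 + (Im lam)\<^sup>2 * (\<rho> - inverse \<rho>)\<^sup>2) / 2"
proof -
  define A where "A = (\<rho> + inverse \<rho>) / 2"
  define B where "B = (\<rho> - inverse \<rho>) / 2"
  have ri: "inverse \<rho> < 1" "inverse \<rho> > 0" using \<rho> by (auto simp: inverse_less_1_iff)
  have "\<rho> - inverse \<rho> > 0" "\<rho> + inverse \<rho> > 0" using ri \<rho> by linarith+
  then have B0: "B > 0" and A0: "A > 0" unfolding B_def A_def by simp_all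
  have AB: "A\<^sup>2 - 1 = B\<^sup>2"
  proof -
    have "\<rho> * inverse \<rho> = 1" using \<rho> by simp
    then show ?thesis unfolding A_def B_def by (simp add: power2_eq_square algebra_simps)
  qed
  define x where "x = Re z"
  define y where "y = Im z"
  have d1: "(cmod (z - 1))\<^sup>2 = (x - 1)\<^sup>2 + y\<^sup>2" unfolding x_def y_def by (simp add: cmod_power2)
  have d2: "(cmod (z + 1))\<^sup>2 = (x + 1)\<^sup>2 + y\<^sup>2" unfolding x_def y_def by (simp add: cmod_power2)
  have tri1: "cmod (z + 1) - cmod (z - 1) \<le> 2"
    using norm_triangle_ineq[of "z - 1" 2] by (simp add: add.commute)
  have tri2: "cmod (z - 1) - cmod (z + 1) \<le> 2"
    using norm_triangle_ineq4[of "z + 1" 2] by simp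
  have S2: "2 \<le> cmod (z - 1) + cmod (z + 1)"
    using norm_triangle_ineq4[of "z + 1" "z - 1"] by (simp add: norm_minus_commute)
  have SA: "cmod (z - 1) + cmod (z + 1) < 2 * A" using z unfolding bernstein_ellipse_def A_def by simp
  have ell: "(A\<^sup>2 - 1) * x\<^sup>2 + A\<^sup>2 * y\<^sup>2 \<le> A\<^sup>2 * (A\<^sup>2 - 1)"
    by (rule ell_alg[OF d1 d2 _ _ tri1 tri2 S2 SA]) auto
  then have ell': "B\<^sup>2 * x\<^sup>2 + A\<^sup>2 * y\<^sup>2 \<le> A\<^sup>2 * B\<^sup>2" unfolding AB .
  have u: "(x / A)\<^sup>2 + (y / B)\<^sup>2 \<le> 1"
  proof -
    have "(x / A)\<^sup>2 + (y / B)\<^sup>2 = (B\<^sup>2 * x\<^sup>2 + A\<^sup>2 * y\<^sup>2) / (A\<^sup>2 * B\<^sup>2)"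
      using A0 B0 by (simp add: power_divide field_simps)
    also have "\<dots> \<le> 1" using ell' A0 B0 by (simp add: divide_le_eq_1)
    finally show ?thesis .
  qed
  have re: "Re (z * lam) = (x / A) * (A * Re lam) + (y / B) * (- B * Im lam)"
    unfolding x_def y_def using A0 B0 by simp
  have "(Re (z * lam))\<^sup>2 \<le> ((x / A)\<^sup>2 + (y / B)\<^sup>2) * ((A * Re lam)\<^sup>2 + (- B * Im lam)\<^sup>2)"
    unfolding re by (rule cs2)
  also have "\<dots> \<le> 1 * ((A * Re lam)\<^sup>2 + (- B * Im lam)\<^sup>2)"
    using u by (intro mult_right_mono) auto
  finally have "Re (z * lam) \<le> sqrt ((A * Re lam)\<^sup>2 + (- B * Im lam)\<^sup>2)"
    by (intro real_le_rsqrt) simp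
  also have "sqrt ((A * Re lam)\<^sup>2 + (- B * Im lam)\<^sup>2)
      = sqrt ((Re lam)\<^sup>2 * (\<rho> + inverse \<rho>)\<^sup>2 + (Im lam)\<^sup>2 * (\<rho> - inverse \<rho>)\<^sup>2) / 2"
  proof -
    have "(Re lam)\<^sup>2 * (\<rho> + inverse \<rho>)\<^sup>2 + (Im lam)\<^sup>2 * (\<rho> - inverse \<rho>)\<^sup>2
        = 2\<^sup>2 * ((A * Re lam)\<^sup>2 + (- B * Im lam)\<^sup>2)"
      unfolding A_def B_def by (rule sq_ident)
    moreover have "sqrt (2\<^sup>2 * ((A * Re lam)\<^sup>2 + (- B * Im lam)\<^sup>2)) = 2 * sqrt ((A * Re lam)\<^sup>2 + (- B * Im lam)\<^sup>2)"
      by (simp only: real_sqrt_mult real_sqrt_abs abs_numeral)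
    ultimately show ?thesis by simp
  qed
  finally show ?thesis .
qed

lemma rho_sum_gt2: fixes \<rho> :: real shows "\<rho> > 1 \<Longrightarrow> \<rho> + inverse \<rho> > 2"
proof -
  assume r: "\<rho> > 1"
  have "(\<rho> - 1)\<^sup>2 > 0" using r by simp
  then have "\<rho> * \<rho> + 1 > 2 * \<rho>" by (simp add: power2_eq_square algebra_simps)
  then have "(\<rho> * \<rho> + 1) / \<rho> > 2" using r by (simp add: less_divide_eq)
  moreover have "(\<rho> * \<rho> + 1) / \<rho> = \<rho> + inverse \<rho>" using r by (simp add: field_simps)
  ultimately show ?thesis by simp
qed

lemma E_open: "open (bernstein_ellipse \<rho>)"
  unfolding bernstein_ellipse_def by (intro open_Collect_less continuous_intros)

lemma E_convex: "convex (bernstein_ellipse \<rho>)"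
  unfolding convex_alt
proof (intro ballI allI impI)
  fix x y :: complex and u :: real
  assume x: "x \<in> bernstein_ellipse \<rho>" and y: "y \<in> bernstein_ellipse \<rho>" and u: "0 \<le> u \<and> u \<le> 1"
  let ?c = "\<rho> + inverse \<rho>"
  have ax: "cmod (x - 1) + cmod (x + 1) < ?c" using x by (simp add: bernstein_ellipse_def)
  have ay: "cmod (y - 1) + cmod (y + 1) < ?c" using y by (simp add: bernstein_ellipse_def)
  let ?z = "(1 - u) *\<^sub>R x + u *\<^sub>R y"
  have e1: "?z - 1 = (1 - u) *\<^sub>R (x - 1) + u *\<^sub>R (y - 1)" by (simp add: algebra_simps)
  have e2: "?z + 1 = (1 - u) *\<^sub>R (x + 1) + u *\<^sub>R (y + 1)" by (simp add: algebra_simps)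
  have n1: "cmod (?z - 1) \<le> (1 - u) * cmod (x - 1) + u * cmod (y - 1)"
    unfolding e1
  proof -
    have "norm ((1 - u) *\<^sub>R (x - 1) + u *\<^sub>R (y - 1)) \<le> norm ((1 - u) *\<^sub>R (x - 1)) + norm (u *\<^sub>R (y - 1))"
      by (rule norm_triangle_ineq)
    also have "\<dots> = (1 - u) * cmod (x - 1) + u * cmod (y - 1)" using u by simp
    finally show "norm ((1 - u) *\<^sub>R (x - 1) + u *\<^sub>R (y - 1)) \<le> (1 - u) * cmod (x - 1) + u * cmod (y - 1)" .
  qed
  have n2: "cmod (?z + 1) \<le> (1 - u) * cmod (x + 1) + u * cmod (y + 1)"
    unfolding e2
  proof -
    have "norm ((1 - u) *\<^sub>R (x + 1) + u *\<^sub>R (y + 1)) \<le> norm ((1 - u) *\<^sub>R (x + 1)) + norm (u *\<^sub>R (y + 1))"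
      by (rule norm_triangle_ineq)
    also have "\<dots> = (1 - u) * cmod (x + 1) + u * cmod (y + 1)" using u by simp
    finally show "norm ((1 - u) *\<^sub>R (x + 1) + u *\<^sub>R (y + 1)) \<le> (1 - u) * cmod (x + 1) + u * cmod (y + 1)" .
  qed
  have "cmod (?z - 1) + cmod (?z + 1) < ?c"
  proof -
    have "(1 - u) * (cmod (x - 1) + cmod (x + 1)) + u * (cmod (y - 1) + cmod (y + 1)) < ?c"
    proof (cases "u = 0")
      case True then show ?thesis using ax by simp
    next
      case False
      then have "u * (cmod (y - 1) + cmod (y + 1)) < u * ?c" using u ay by simp
      moreover have "(1 - u) * (cmod (x - 1) + cmod (x + 1)) \<le> (1 - u) * ?c" using u ax by (intro mult_left_mono) auto
      ultimately show ?thesis by (simp add: algebra_simps)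
    qed
    then show ?thesis using n1 n2 by (simp add: algebra_simps)
  qed
  then show "?z \<in> bernstein_ellipse \<rho>" by (simp add: bernstein_ellipse_def)
qed

lemma E_real: assumes "\<rho> > 1" "x \<in> {-1..1}" shows "complex_of_real x \<in> bernstein_ellipse \<rho>"
proof -
  have "cmod (of_real x - 1) + cmod (of_real x + 1) = 2"
  proof -
    have "cmod (of_real x - 1) = \<bar>x - 1\<bar>" by (metis norm_of_real of_real_1 of_real_diff)
    moreover have "cmod (of_real x + 1) = \<bar>x + 1\<bar>" by (metis norm_of_real of_real_1 of_real_add)
    ultimately have "cmod (of_real x - 1) = 1 - x" "cmod (of_real x + 1) = 1 + x" using assms(2) by auto
    then show ?thesis by simp
  qed
  then show ?thesis using rho_sum_gt2[OF assms(1)] by (simp add: bernstein_ellipse_def)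
qed

lemma E_z1: assumes "z \<in> bernstein_ellipse \<rho>" shows "cmod (z + 1) \<le> (\<rho> + inverse \<rho> + 2) / 2"
proof -
  have "cmod (z + 1) \<le> cmod (z - 1) + 2" using norm_triangle_ineq[of "z - 1" 2] by (simp add: add.commute)
  then show ?thesis using assms by (simp add: bernstein_ellipse_def)
qed

definition J :: "complex \<Rightarrow> complex" where "J w = (w + inverse w) / 2"

lemma J_sum: assumes "w \<noteq> 0" shows "cmod (J w - 1) + cmod (J w + 1) = cmod w + inverse (cmod w)"
proof -
  have e1: "J w - 1 = (w - 1)\<^sup>2 / (2 * w)" using assms by (simp add: J_def field_simps power2_eq_square)
  have e2: "J w + 1 = (w + 1)\<^sup>2 / (2 * w)" using assms by (simp add: J_def field_simps power2_eq_square)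
  have s: "(cmod (w - 1))\<^sup>2 + (cmod (w + 1))\<^sup>2 = 2 * (cmod w)\<^sup>2 + 2"
    by (simp add: cmod_power2) (simp add: power2_eq_square algebra_simps)
  have "cmod (J w - 1) + cmod (J w + 1) = ((cmod (w - 1))\<^sup>2 + (cmod (w + 1))\<^sup>2) / (2 * cmod w)"
    unfolding e1 e2 by (simp add: norm_divide norm_mult norm_power add_divide_distrib)
  also have "\<dots> = cmod w + inverse (cmod w)" unfolding s using assms by (simp add: field_simps power2_eq_square)
  finally show ?thesis .
qed

lemma J_in_E:
  assumes r: "\<rho> > 1" and w: "w \<in> ball 0 \<rho> - cball 0 (1/\<rho>)"
  shows "J w \<in> bernstein_ellipse \<rho>"
proof -
  define t where "t = cmod w"
  have t: "1/\<rho> < t" "t < \<rho>" using w unfolding t_def by auto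
  have t0: "t > 0" using t r by (smt (verit) divide_pos_pos)
  have "w \<noteq> 0" using t0 unfolding t_def by auto
  have "t * \<rho> > 1" using t(1) r by (simp add: divide_less_eq mult.commute)
  then have "(\<rho> - t) * (t * \<rho> - 1) > 0" using t by simp
  then have "(\<rho> + inverse \<rho>) - (t + inverse t) > 0"
  proof -
    have "(\<rho> + inverse \<rho>) - (t + inverse t) = (\<rho> - t) * (t * \<rho> - 1) / (t * \<rho>)"
      using t0 r by (simp add: field_simps)
    then show ?thesis using \<open>(\<rho> - t) * (t * \<rho> - 1) > 0\<close> t0 r by simp
  qed
  then show ?thesis using J_sum[OF \<open>w \<noteq> 0\<close>] unfolding bernstein_ellipse_def t_def by simp
qed

lemma J_cis: "J (cis \<theta>) = of_real (cos \<theta>)"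
  unfolding J_def cis_inverse by (simp add: complex_eq_iff)

lemma J_cis_neg: "J (cis (- \<theta>)) = J (cis \<theta>)"
  unfolding J_cis by simp

lemma J_hol: "J holomorphic_on (ball 0 \<rho> - cball 0 (1/\<rho>))" if "\<rho> > 1"
proof -
  have "w \<noteq> 0" if "w \<in> ball 0 \<rho> - cball 0 (1/\<rho>)" for w using that \<open>\<rho> > 1\<close> by auto
  then show ?thesis unfolding J_def by (intro holomorphic_intros) auto
qed

lemma zeta_integral: "((\<lambda>t. exp (a * (1 - t))) has_integral zeta a) {0..1}"
proof (cases "a = 0")
  case True
  then show ?thesis using has_integral_const_real[of 1 0 1] by (simp add: zeta_def)
next
  case False
  let ?G = "\<lambda>t. - exp (a * (1 - t)) / a"
  have "((\<lambda>t. exp (a * (1 - t))) has_integral (?G 1 - ?G 0)) {0..1}"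
  proof (rule fundamental_theorem_of_calculus)
    fix x :: real assume "x \<in> {0..1}"
    show "(?G has_vector_derivative exp (a * (1 - x))) (at x within {0..1})"
      unfolding has_real_derivative_iff_has_vector_derivative[symmetric]
      using False by (auto intro!: derivative_eq_intros simp: field_simps)
  qed simp
  then show ?thesis using False by (simp add: zeta_def field_simps)
qed

lemma zeta_mono: assumes "a \<le> b" shows "zeta a \<le> zeta b"
proof (rule has_integral_le[OF zeta_integral zeta_integral])
  fix t :: real assume "t \<in> {0..1}"
  then show "exp (a * (1 - t)) \<le> exp (b * (1 - t))" using assms by (simp add: mult_right_mono)
qed

lemma zeta_pos: "zeta a > 0"
proof (cases "a > 0")
  case True then show ?thesis by (simp add: zeta_def)
next
  case False
  show ?thesis
  proof (cases "a = 0")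
    case True then show ?thesis by (simp add: zeta_def)
  next
    case nz: False
    then have "a < 0" using False by simp
    moreover have "exp a < 1" using \<open>a < 0\<close> by simp
    ultimately show ?thesis using nz by (simp add: zeta_def divide_neg_neg)
  qed
qed

lemma u_split:
  fixes \<phi> :: "real \<Rightarrow> complex" and \<tau> :: real and lam :: complex
  shows "of_real \<tau> * integral {-1..t} (\<lambda>s. exp (of_real (\<tau> * (t - s)) * lam) * \<phi> s)
      = of_real \<tau> * (exp (of_real (\<tau> * t) * lam) * integral {-1..t} (\<lambda>s. exp (- (of_real (\<tau> * s) * lam)) * \<phi> s))"
proof -
  have "(\<lambda>s. exp (of_real (\<tau> * (t - s)) * lam) * \<phi> s)
      = (\<lambda>s. exp (of_real (\<tau> * t) * lam) * (exp (- (of_real (\<tau> * s) * lam)) * \<phi> s))"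
  proof
    fix s
    have "exp (of_real (\<tau> * (t - s)) * lam) = exp (of_real (\<tau> * t) * lam) * exp (- (of_real (\<tau> * s) * lam))"
      by (subst exp_add[symmetric]) (simp add: algebra_simps)
    then show "exp (of_real (\<tau> * (t - s)) * lam) * \<phi> s = exp (of_real (\<tau> * t) * lam) * (exp (- (of_real (\<tau> * s) * lam)) * \<phi> s)"
      by simp
  qed
  then show ?thesis by (simp add: Henstock_Kurzweil_Integration.integral_mult_right)
qed

lemma U_exists:
  fixes F :: "complex \<Rightarrow> complex" and \<phi> :: "real \<Rightarrow> complex" and lam :: complex and \<tau> \<rho> :: real
  assumes \<rho>: "\<rho> > 1" and tau: "\<tau> > 0"
    and holF: "F holomorphic_on bernstein_ellipse \<rho>"
    and F\<phi>: "\<And>x. x \<in> {-1..1} \<Longrightarrow> F (of_real x) = \<phi> x"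
    and bdF: "bounded (F ` bernstein_ellipse \<rho>)"
  defines "u \<equiv> (\<lambda>t. of_real \<tau> * integral {-1..t} (\<lambda>s. exp (of_real (\<tau> * (t - s)) * lam) * \<phi> s))"
  defines "MF \<equiv> (SUP z\<in>bernstein_ellipse \<rho>. cmod (F z))"
  defines "cst \<equiv> \<tau> * (Re lam + sqrt ((Re lam)\<^sup>2 * (\<rho> + inverse \<rho>)\<^sup>2 + (Im lam)\<^sup>2 * (\<rho> - inverse \<rho>)\<^sup>2) / 2)"
  obtains U where "U holomorphic_on bernstein_ellipse \<rho>"
    "\<And>x. x \<in> {-1..1} \<Longrightarrow> U (of_real x) = u x"
    "\<And>z. z \<in> bernstein_ellipse \<rho> \<Longrightarrow> norm (U z) \<le> \<tau> * ((\<rho> + inverse \<rho> + 2) / 2) * zeta cst * MF"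
proof -
  define E where "E = bernstein_ellipse \<rho>"
  have oE: "open E" and cE: "convex E" unfolding E_def by (rule E_open, rule E_convex)
  have m1: "-1 \<in> E" unfolding E_def using E_real[OF \<rho>, of "-1"] by simp
  define h where "h = (\<lambda>s. exp (- (of_real \<tau> * s * lam)) * F s)"
  have holh: "h holomorphic_on E" unfolding h_def E_def by (intro holomorphic_intros holF)
  obtain G where G: "\<And>x. x \<in> E \<Longrightarrow> (G has_field_derivative h x) (at x within E)"
    using holomorphic_convex_primitive'[OF cE oE holh] by blast
  have holG: "G holomorphic_on E"
    unfolding holomorphic_on_def field_differentiable_def using G by blast
  define U where "U = (\<lambda>z. of_real \<tau> * exp (of_real \<tau> * z * lam) * (G z - G (-1)))"
  have holU: "U holomorphic_on E" unfolding U_def by (intro holomorphic_intros holG)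
  have ci: "(h has_contour_integral (G z - G (-1))) (linepath (-1) z)" if z: "z \<in> E" for z
  proof -
    have "closed_segment (-1) z \<subseteq> E" by (rule closed_segment_subset[OF m1 z cE])
    then show ?thesis using contour_integral_primitive[OF G, of "linepath (-1) z"] by simp
  qed
  have bddF: "bdd_above ((\<lambda>z. cmod (F z)) ` E)"
  proof -
    obtain B where "\<And>x. x \<in> F ` E \<Longrightarrow> norm x \<le> B" using bdF unfolding E_def bounded_iff by blast
    then show ?thesis by (intro bdd_aboveI) auto
  qed
  have FMF: "cmod (F z) \<le> MF" if "z \<in> E" for z unfolding MF_def E_def[symmetric] by (rule cSUP_upper[OF that bddF])
  have MF0: "MF \<ge> 0" using FMF[OF m1] by (meson norm_ge_zero order_trans)
  show ?thesis
  proof (rule that[of U])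
    show "U holomorphic_on bernstein_ellipse \<rho>" using holU unfolding E_def .
  next
    fix x :: real assume x: "x \<in> {-1..1}"
    show "U (of_real x) = u x"
    proof (cases "x = -1")
      case True then show ?thesis by (simp add: U_def u_def)
    next
      case False
      then have xg: "-1 < x" using x by simp
      have xE: "of_real x \<in> E" unfolding E_def using E_real[OF \<rho> x] .
      have "((\<lambda>s. h (of_real s)) has_integral (G (of_real x) - G (-1))) {Re (-1)..Re (of_real x)}"
        using ci[OF xE] xg by (subst has_contour_integral_linepath_Reals_iff[symmetric]) auto
      then have hi: "((\<lambda>s. h (of_real s)) has_integral (G (of_real x) - G (-1))) {-1..x}" by simp
      have "integral {-1..x} (\<lambda>s. exp (- (of_real (\<tau> * s) * lam)) * \<phi> s) = integral {-1..x} (\<lambda>s. h (of_real s))"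
        by (rule integral_cong) (use x F\<phi> in \<open>auto simp: h_def\<close>)
      also have "\<dots> = G (of_real x) - G (-1)" using integral_unique[OF hi] .
      finally have "integral {-1..x} (\<lambda>s. exp (- (of_real (\<tau> * s) * lam)) * \<phi> s) = G (of_real x) - G (-1)" .
      then show ?thesis unfolding u_def u_split U_def by simp
    qed
  next
    fix z assume zE0: "z \<in> bernstein_ellipse \<rho>"
    then have zE: "z \<in> E" unfolding E_def .
    define c where "c = Re ((z + 1) * lam)"
    define K0 where "K0 = \<tau> * MF * cmod (z + 1)"
    have hc: "((\<lambda>t. h (linepath (-1) z t) * vector_derivative (linepath (-1) z) (at t within {0..1})) has_integral (G z - G (-1))) {0..1}"
      using ci[OF zE] unfolding has_contour_integral_def .
    have hc2: "((\<lambda>t. h (linepath (-1) z t) * (z + 1)) has_integral (G z - G (-1))) {0..1}"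
      using hc by (subst (asm) has_integral_cong[where g = "\<lambda>t. h (linepath (-1) z t) * (z + 1)"])
                  (auto simp: vector_derivative_linepath_within)
    have hU: "((\<lambda>t. of_real \<tau> * exp (of_real \<tau> * z * lam) * (h (linepath (-1) z t) * (z + 1))) has_integral U z) {0..1}"
      unfolding U_def by (rule has_integral_mult_right[OF hc2])
    have hB: "((\<lambda>t. K0 * exp ((\<tau> * c) * (1 - t))) has_integral (K0 * zeta (\<tau> * c))) {0..1}"
      by (rule has_integral_mult_right[OF zeta_integral])
    have "norm (U z) \<le> K0 * zeta (\<tau> * c)"
    proof -
      have "norm (integral {0..1} (\<lambda>t. of_real \<tau> * exp (of_real \<tau> * z * lam) * (h (linepath (-1) z t) * (z + 1))))
          \<le> integral {0..1} (\<lambda>t. K0 * exp ((\<tau> * c) * (1 - t)))"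
      proof (rule integral_norm_bound_integral)
        show "(\<lambda>t. of_real \<tau> * exp (of_real \<tau> * z * lam) * (h (linepath (-1) z t) * (z + 1))) integrable_on {0..1}"
          using hU by blast
        show "(\<lambda>t. K0 * exp ((\<tau> * c) * (1 - t))) integrable_on {0..1}" using hB by blast
        fix t :: real assume t: "t \<in> {0..1}"
        have lE: "linepath (-1) z t \<in> E"
          using closed_segment_subset[OF m1 zE cE] t by (auto simp: linepath_in_path)
        have "of_real \<tau> * z * lam + (- (of_real \<tau> * linepath (-1) z t * lam)) = of_real (\<tau> * (1 - t)) * ((z + 1) * lam)"
          by (simp add: linepath_def scaleR_conv_of_real algebra_simps)
        then have ee: "exp (of_real \<tau> * z * lam) * exp (- (of_real \<tau> * linepath (-1) z t * lam)) = exp (of_real (\<tau> * (1 - t)) * ((z + 1) * lam))"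
          by (simp flip: exp_add)
        have eq1: "of_real \<tau> * exp (of_real \<tau> * z * lam) * (h (linepath (-1) z t) * (z + 1))
            = of_real \<tau> * exp (of_real (\<tau> * (1 - t)) * ((z + 1) * lam)) * (F (linepath (-1) z t) * (z + 1))"
          unfolding h_def ee[symmetric] by (simp only: mult_ac)
        have W: "Re (of_real (\<tau> * (1 - t)) * ((z + 1) * lam)) = (\<tau> * c) * (1 - t)"
          unfolding c_def by simp
        have "norm (of_real \<tau> * exp (of_real \<tau> * z * lam) * (h (linepath (-1) z t) * (z + 1)))
            = \<tau> * exp ((\<tau> * c) * (1 - t)) * (cmod (F (linepath (-1) z t)) * cmod (z + 1))"
          by (simp only: eq1 norm_mult norm_of_real norm_exp_eq_Re W abs_of_pos[OF tau])
        also have "\<tau> * exp ((\<tau> * c) * (1 - t)) * (cmod (F (linepath (-1) z t)) * cmod (z + 1))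
            \<le> \<tau> * exp ((\<tau> * c) * (1 - t)) * (MF * cmod (z + 1))"
          using FMF[OF lE] tau by (intro mult_right_mono mult_left_mono) auto
        also have "\<dots> = K0 * exp ((\<tau> * c) * (1 - t))" unfolding K0_def by (simp only: mult_ac)
        finally show "norm (of_real \<tau> * exp (of_real \<tau> * z * lam) * (h (linepath (-1) z t) * (z + 1))) \<le> K0 * exp ((\<tau> * c) * (1 - t))" .
      qed
      then show ?thesis unfolding integral_unique[OF hU] integral_unique[OF hB] .
    qed
    also have "\<dots> \<le> \<tau> * ((\<rho> + inverse \<rho> + 2) / 2) * zeta cst * MF"
    proof -
      have c: "c \<le> Re lam + sqrt ((Re lam)\<^sup>2 * (\<rho> + inverse \<rho>)\<^sup>2 + (Im lam)\<^sup>2 * (\<rho> - inverse \<rho>)\<^sup>2) / 2"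
        using ell_bound[OF \<rho> zE0, of lam] unfolding c_def by (simp add: algebra_simps)
      have "zeta (\<tau> * c) \<le> zeta cst" unfolding cst_def using c tau by (intro zeta_mono mult_left_mono) auto
      moreover have "cmod (z + 1) \<le> (\<rho> + inverse \<rho> + 2) / 2" by (rule E_z1[OF zE0])
      moreover have "zeta (\<tau> * c) \<ge> 0" using zeta_pos less_imp_le by blast
      moreover have "inverse \<rho> > 0" using \<rho> by simp
      ultimately have "cmod (z + 1) * zeta (\<tau> * c) \<le> (\<rho> + inverse \<rho> + 2) / 2 * zeta cst"
        by (intro mult_mono) auto
      then have "(\<tau> * MF) * (cmod (z + 1) * zeta (\<tau> * c)) \<le> (\<tau> * MF) * ((\<rho> + inverse \<rho> + 2) / 2 * zeta cst)"
        using tau MF0 by (intro mult_left_mono) auto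
      then show ?thesis unfolding K0_def by (simp add: mult_ac)
    qed
    finally show "norm (U z) \<le> \<tau> * ((\<rho> + inverse \<rho> + 2) / 2) * zeta cst * MF" .
  qed
qed

lemma arith4: fixes \<tau> c Z M D :: real
  shows "4 * (\<tau> * ((c + 2) / 2) * Z * M) / D = 2 * \<tau> * (c + 2) / D * Z * M"
proof -
  have h1: "4 * (\<tau> * ((c + 2) / 2) * Z * M) = 2 * \<tau> * (c + 2) * Z * M" by (simp add: field_simps)
  have h2: "2 * \<tau> * (c + 2) / D * Z * M = 2 * \<tau> * (c + 2) * Z * M / D" by (simp only: times_divide_eq_left)
  show ?thesis by (simp only: h1 h2)
qed

lemma part2:
  fixes K :: nat and F :: "complex \<Rightarrow> complex" and \<phi> :: "real \<Rightarrow> complex" and lam :: complex and \<tau> \<rho> :: real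
  assumes K: "K \<ge> 1" and \<rho>: "\<rho> > 1" and tau: "\<tau> > 0"
    and holF: "F holomorphic_on bernstein_ellipse \<rho>"
    and F\<phi>: "\<forall>x\<in>{-1..1}. F (of_real x) = \<phi> x"
    and bdF: "bounded (F ` bernstein_ellipse \<rho>)"
  defines "u \<equiv> (\<lambda>t. of_real \<tau> * integral {-1..t} (\<lambda>s. exp (of_real (\<tau> * (t - s)) * lam) * \<phi> s))"
  shows "C0norm (\<lambda>t. u t - cheb_interp K u t)
             \<le> 2 * \<tau> * (\<rho> + inverse \<rho> + 2) / (\<rho> ^ K * (\<rho> - 1)) *
                zeta (\<tau> * (Re lam + sqrt ((Re lam)\<^sup>2 * (\<rho> + inverse \<rho>)\<^sup>2
                                           + (Im lam)\<^sup>2 * (\<rho> - inverse \<rho>)\<^sup>2) / 2)) *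
                (SUP z\<in>bernstein_ellipse \<rho>. cmod (F z))"
proof -
  define MF where "MF = (SUP z\<in>bernstein_ellipse \<rho>. cmod (F z))"
  define cst where "cst = \<tau> * (Re lam + sqrt ((Re lam)\<^sup>2 * (\<rho> + inverse \<rho>)\<^sup>2 + (Im lam)\<^sup>2 * (\<rho> - inverse \<rho>)\<^sup>2) / 2)"
  define Mu where "Mu = \<tau> * ((\<rho> + inverse \<rho> + 2) / 2) * zeta cst * MF"
  obtain U where holU: "U holomorphic_on bernstein_ellipse \<rho>"
    and Uu: "\<And>x. x \<in> {-1..1} \<Longrightarrow> U (of_real x) = u x"
    and Ub: "\<And>z. z \<in> bernstein_ellipse \<rho> \<Longrightarrow> norm (U z) \<le> Mu"
    using U_exists[OF \<rho> tau holF _ bdF, of \<phi> lam] F\<phi> unfolding u_def Mu_def MF_def cst_def by blast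
  have Mu0: "Mu \<ge> 0"
  proof -
    have "-1 \<in> bernstein_ellipse \<rho>" using E_real[OF \<rho>, of "-1"] by simp
    then show ?thesis using Ub[of "-1"] by (meson norm_ge_zero order_trans)
  qed
  define A where "A = ball 0 \<rho> - cball (0::complex) (1/\<rho>)"
  define g where "g = U \<circ> J"
  have JA: "J ` A \<subseteq> bernstein_ellipse \<rho>" unfolding A_def using J_in_E[OF \<rho>] by blast
  have holg: "g holomorphic_on A"
    unfolding g_def A_def by (rule holomorphic_on_compose_gen[OF J_hol[OF \<rho>] holU JA[unfolded A_def]])
  have bdg: "norm (g w) \<le> Mu" if "w \<in> A" for w unfolding g_def using Ub JA that by auto
  have symg: "g (cis (- \<theta>)) = g (cis \<theta>)" for \<theta> unfolding g_def by (simp add: J_cis_neg)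
  have bound_r: "norm (u t - cheb_interp K u t) \<le> 4 * Mu / (r ^ K * (r - 1))"
    if r: "1 < r" "r < \<rho>" and t: "t \<in> {-1..1}" for r t
  proof -
    obtain a where ab: "\<And>k. k \<ge> 1 \<Longrightarrow> norm (a k) \<le> 2 * Mu / r^k"
      and asum: "\<And>\<theta>. (\<lambda>k. a k * of_real (cos (real k * \<theta>))) sums g (cis \<theta>)"
      using cheb_expansion[OF r holg[unfolded A_def] bdg[unfolded A_def] symg Mu0] by blast
    show ?thesis
    proof (rule interp_bound[OF K r(1)])
      fix x :: real assume x: "x \<in> {-1..1}"
      have cx: "cos (arccos x) = x" using x by (intro cos_arccos) auto
      have "g (cis (arccos x)) = u x" unfolding g_def using Uu[OF x] by (simp add: J_cis cx)
      moreover have "poly (cheb k) x = cos (real k * arccos x)" for k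
        using cheb_cos[of k "arccos x"] cx by simp
      ultimately show "(\<lambda>k. a k * of_real (poly (cheb k) x)) sums u x"
        using asum[of "arccos x"] by simp
    next
      fix k :: nat assume "k > K" then show "norm (a k) \<le> 2 * Mu / r ^ k" using ab K by simp
    qed (rule t)
  qed
  have bound: "norm (u t - cheb_interp K u t) \<le> 4 * Mu / (\<rho> ^ K * (\<rho> - 1))" if t: "t \<in> {-1..1}" for t
  proof -
    have lim: "((\<lambda>r. 4 * Mu / (r ^ K * (r - 1))) \<longlongrightarrow> 4 * Mu / (\<rho> ^ K * (\<rho> - 1))) (at_left \<rho>)"
    proof -
      have "((\<lambda>r. 4 * Mu / (r ^ K * (r - 1))) \<longlongrightarrow> 4 * Mu / (\<rho> ^ K * (\<rho> - 1))) (at \<rho>)"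
        using \<rho> by (intro tendsto_intros) auto
      then show ?thesis by (rule tendsto_within_subset) simp
    qed
    have ev: "\<forall>\<^sub>F r in at_left \<rho>. norm (u t - cheb_interp K u t) \<le> 4 * Mu / (r ^ K * (r - 1))"
      using eventually_at_left_real[OF \<rho>] by eventually_elim (use bound_r t in auto)
    show ?thesis by (rule tendsto_lowerbound[OF lim ev trivial_limit_at_left_real])
  qed
  have "C0norm (\<lambda>t. u t - cheb_interp K u t) \<le> 4 * Mu / (\<rho> ^ K * (\<rho> - 1))"
    by (rule C0_least) (rule bound)
  also have "4 * Mu / (\<rho> ^ K * (\<rho> - 1)) = 2 * \<tau> * (\<rho> + inverse \<rho> + 2) / (\<rho> ^ K * (\<rho> - 1)) * zeta cst * MF"
    unfolding Mu_def by (rule arith4)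
  finally show ?thesis unfolding cst_def MF_def .
qed

theorem lemma4p9:
  fixes K q :: nat and \<phi> :: "real \<Rightarrow> complex" and D :: "nat \<Rightarrow> real \<Rightarrow> complex"
    and lam :: complex and \<tau> \<sigma> :: real
  assumes K: "K \<ge> 1"
    and smooth: "D 0 = \<phi>"
      "\<And>i t. t \<in> {-1..1} \<Longrightarrow> (D i has_vector_derivative D (Suc i) t) (at t within {-1..1})"
    and tau: "\<tau> > 0"
    and q: "q \<le> K"
    and sigma: "\<And>f g. deriv_chain (Suc q) g f \<Longrightarrow> continuous_on {-1..1} (g (Suc q)) \<Longrightarrow>
                 C0norm (\<lambda>t. f t - cheb_interp K f t) \<le> \<sigma> * C0norm (g (Suc q))"
  defines "u \<equiv> (\<lambda>t. of_real \<tau> * integral {-1..t} (\<lambda>s. exp (of_real (\<tau> * (t - s)) * lam) * \<phi> s))"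
  shows "(C0norm (\<lambda>t. u t - cheb_interp K u t)
           \<le> \<sigma> * (cmod (of_real \<tau> * lam) ^ (q + 1) *
                   (if Re lam = 0 then 2 * \<tau> else (exp (2 * \<tau> * Re lam) - 1) / Re lam) * C0norm \<phi>
                 + \<tau> * (\<Sum>i\<le>q. cmod (of_real \<tau> * lam) ^ i * C0norm (D (q - i)))))
    \<and> (\<forall>\<rho> F. \<rho> > 1 \<longrightarrow> F holomorphic_on bernstein_ellipse \<rho> \<longrightarrow>
           (\<forall>x\<in>{-1..1}. F (of_real x) = \<phi> x) \<longrightarrow>
           bounded (F ` bernstein_ellipse \<rho>) \<longrightarrow>
           C0norm (\<lambda>t. u t - cheb_interp K u t)
             \<le> 2 * \<tau> * (\<rho> + inverse \<rho> + 2) / (\<rho> ^ K * (\<rho> - 1)) *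
                zeta (\<tau> * (Re lam + sqrt ((Re lam)\<^sup>2 * (\<rho> + inverse \<rho>)\<^sup>2
                                           + (Im lam)\<^sup>2 * (\<rho> - inverse \<rho>)\<^sup>2) / 2)) *
                (SUP z\<in>bernstein_ellipse \<rho>. cmod (F z)))"
proof -
  have P1: "C0norm (\<lambda>t. u t - cheb_interp K u t)
           \<le> \<sigma> * (cmod (of_real \<tau> * lam) ^ (q + 1) *
                   (if Re lam = 0 then 2 * \<tau> else (exp (2 * \<tau> * Re lam) - 1) / Re lam) * C0norm \<phi>
                 + \<tau> * (\<Sum>i\<le>q. cmod (of_real \<tau> * lam) ^ i * C0norm (D (q - i))))"
    unfolding u_def by (rule part1) (use K smooth tau sigma in \<open>simp_all\<close>)
  show ?thesis
  proof (intro conjI allI impI)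
    show "C0norm (\<lambda>t. u t - cheb_interp K u t)
           \<le> \<sigma> * (cmod (of_real \<tau> * lam) ^ (q + 1) *
                   (if Re lam = 0 then 2 * \<tau> else (exp (2 * \<tau> * Re lam) - 1) / Re lam) * C0norm \<phi>
                 + \<tau> * (\<Sum>i\<le>q. cmod (of_real \<tau> * lam) ^ i * C0norm (D (q - i))))" by (rule P1)
  next
    fix \<rho> :: real and F :: "complex \<Rightarrow> complex"
    assume "\<rho> > 1" "F holomorphic_on bernstein_ellipse \<rho>" "\<forall>x\<in>{-1..1}. F (of_real x) = \<phi> x"
      "bounded (F ` bernstein_ellipse \<rho>)"
    then show "C0norm (\<lambda>t. u t - cheb_interp K u t)
             \<le> 2 * \<tau> * (\<rho> + inverse \<rho> + 2) / (\<rho> ^ K * (\<rho> - 1)) *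
                zeta (\<tau> * (Re lam + sqrt ((Re lam)\<^sup>2 * (\<rho> + inverse \<rho>)\<^sup>2
                                           + (Im lam)\<^sup>2 * (\<rho> - inverse \<rho>)\<^sup>2) / 2)) *
                (SUP z\<in>bernstein_ellipse \<rho>. cmod (F z))"
      unfolding u_def using tau by (intro part2[OF K]) auto
  qed
qed

end
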